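(* Suppose Assumptions (A1)–(A4) hold and let $\mathbf X^{(t)},\mathbf M^{(t)}$ be generated by the EDM algorithm with $\alpha>0$, $\beta\in[0,1)$. Let $\tilde f(\mathbf x)=f(\mathbf x)-f^\star$. Then for every $t\ge0$, $$\mathbb E[\tilde f(\mathbf z^{(t+1)})]\le(1-\alpha\mu)\mathbb E[\tilde f(\mathbf z^{(t)})]-\frac{\alpha(1-\alpha L)}2\mathbb E\|\nabla\bar{\mathbf f}(\mathbf X^{(t)})\|^2+\frac{\alpha L^2}{2n}\mathbb E\|\mathbf X^{(t)}-\overline{\mathbf X}^{(t)}\|_{\mathrm F}^2+\frac{\alpha^3L^2\beta^2}{2(1-\beta)^2}\mathbb E\|\bar{\mathbf m}^{(t-1)}\|^2+\frac{\alpha^2L\sigma^2}{2n}.$$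
   Context: Setting. There are $n$ agents and parameters lie in $\mathbb R^d$. For each agent $i$ there is a data distribution $\mathcal D_i$ and a loss $F_i:\mathbb R^d\times\mathbb R^p\to\mathbb R$; $f_i(\mathbf x)=\mathbb E_{\bm\xi\sim\mathcal D_i}F_i(\mathbf x,\bm\xi)$, $f(\mathbf x)=\frac1n\sum_{i=1}^n f_i(\mathbf x)$, $f^\star=\inf_{\mathbf x}f(\mathbf x)$. For $\mathbf X\in\mathbb R^{n\times d}$ with rows $\mathbf x_1^\top,\dots,\mathbf x_n^\top$: $\nabla\mathbf f(\mathbf X)\in\mathbb R^{n\times d}$ has rows $\nabla f_i(\mathbf x_i)^\top$; for $\bm\Xi=(\bm\xi_1,\dots,\bm\xi_n)$, $\nabla\mathbf F(\mathbf X,\bm\Xi)$ has rows $\nabla F_i(\mathbf x_i,\bm\xi_i)^\top$ (gradients in $\mathbf x$); $\nabla\bar{\mathbf f}(\mathbf X)=\frac1n\sum_i\nabla f_i(\mathbf x_i)\in\mathbb R^d$; $\bar{\mathbf x}=\frac1n\mathbf X^\top\mathbf 1_n$, $\overline{\mathbf X}=\frac1n\mathbf 1_n\mathbf 1_n^\top\mathbf X$; $\mathbf P_{\mathbf I}=\mathbf I-\frac1n\mathbf 1_n\mathbf 1_n^\top$. $\|\cdot\|$ is the Euclidean norm, $\|\cdot\|_{\mathrm F}$ Frobenius, $\|\cdot\|_{\mathrm{op}}$ spectral. (A1) $\mathbf W=(w_{ij})\in\mathbb R^{n\times n}$ is symmetric, doubly stochastic ($\mathbf W\mathbf 1=\mathbf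 1$), has $w_{ii}>0$ for all $i$, nonnegative entries, smallest eigenvalue $>0$, and $\lambda:=\|\mathbf W-\frac1n\mathbf 1\mathbf 1^\top\|_{\mathrm{op}}<1$. (A2) Each $f_i$ is $L$-smooth ($\|\nabla f_i(\mathbf x)-\nabla f_i(\mathbf y)\|\le L\|\mathbf x-\mathbf y\|$) and bounded below. (A3) $\bm\Xi^{(t)}=(\bm\xi_1^{(t)},\dots,\bm\xi_n^{(t)})$ with $\bm\xi_i^{(t)}\sim\mathcal D_i$, all mutually independent over $i$ and $t\ge0$; $\mathcal F^{(t)}$ is the $\sigma$-algebra generated by $\bm\Xi^{(0)},\dots,\bm\Xi^{(t-1)}$; for every $\mathcal F^{(t)}$-measurable random $\mathbf x_i^{(t)}$: $\mathbb E[\nabla F_i(\mathbf x_i^{(t)},\bm\xi_i^{(t)})-\nabla f_i(\mathbf x_i^{(t)})\mid\mathcal F^{(t)}]=0$ and $\mathbb E[\|\nabla F_i(\mathbf x_i^{(t)},\bm\xi_i^{(t)})-\nabla f_i(\mathbf x_i^{(t)})\|^2\mid\mathcal F^{(t)}]\le\sigma^2$. (A4) (Polyak–Łojasiewicz) There is $\mu>0$ with $2\mu(f(\mathbf x)-f^\star)\le\|\nabla f(\mathbf x)\|^2$ for all $\mathbf x\in\mathbb R^d$. EDM algorithm. Given $\alpha>0$, $\beta\in[0,1)$, $\mathbf x^{(0)}\in\mathbb R^d$: set $\mathbf X^{(-1)}=\mathbf X^{(0)}=\mathbf 1_n(\mathbf x^{(0)})^\top$, $\mathbf M^{(-1)}=\mathbf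 0$; for $t\ge0$, $\mathbf M^{(t)}=\beta\mathbf M^{(t-1)}+(1-\beta)\nabla\mathbf F(\mathbf X^{(t)},\bm\Xi^{(t)})$; for $t\ge-1$, $\mathbf X^{(t+2)}=\mathbf W\big(2\mathbf X^{(t+1)}-\mathbf X^{(t)}-\alpha\mathbf M^{(t+1)}+\alpha\mathbf M^{(t)}\big)$. Write $\bar{\mathbf x}^{(t)}=\frac1n(\mathbf X^{(t)})^\top\mathbf 1_n$, $\bar{\mathbf m}^{(t)}=\frac1n(\mathbf M^{(t)})^\top\mathbf 1_n$ (so $\bar{\mathbf m}^{(-1)}=\mathbf 0$). Auxiliary sequence: $\mathbf z^{(0)}=\bar{\mathbf x}^{(0)}$ and $\mathbf z^{(t)}=\frac1{1-\beta}\bar{\mathbf x}^{(t)}-\frac{\beta}{1-\beta}\bar{\mathbf x}^{(t-1)}$ for $t\ge1$. *)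

theory Defs
  imports "HOL-Analysis.Analysis" "HOL-Probability.Probability"
begin

text \<open>Agents are indexed by a finite type 'n (so n = CARD('n)), parameters live in real^'d.
  A stacked matrix X in R^{n x d} is represented as a function 'n => real^'d (row i = x_i).\<close>

definition mix :: "real^'n^'n \<Rightarrow> ('n::finite \<Rightarrow> real^'d) \<Rightarrow> ('n \<Rightarrow> real^'d)" where
  "mix W X = (\<lambda>i. \<Sum>j\<in>UNIV. (W $ i $ j) *\<^sub>R X j)"

definition avg :: "('n::finite \<Rightarrow> real^'d) \<Rightarrow> real^'d" where
  "avg X = (1 / real CARD('n)) *\<^sub>R (\<Sum>i\<in>UNIV. X i)"

text \<open>The state at index t is (X^(t-1), X^(t), M^(t-1)),
  with the convention X^(-1) = X^(0) = 1 x0^T and M^(-1) = 0.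
  Xi t i is the sample xi_i^(t); gF i x xi is the stochastic gradient of F_i in x.\<close>
fun edm :: "real^'n^'n \<Rightarrow> real \<Rightarrow> real \<Rightarrow> real^'d \<Rightarrow> ('n::finite \<Rightarrow> real^'d \<Rightarrow> 'p \<Rightarrow> real^'d)
            \<Rightarrow> (nat \<Rightarrow> 'n \<Rightarrow> 'p) \<Rightarrow> nat
            \<Rightarrow> ('n \<Rightarrow> real^'d) \<times> ('n \<Rightarrow> real^'d) \<times> ('n \<Rightarrow> real^'d)" where
  "edm W \<alpha> \<beta> x0 gF Xi 0 = ((\<lambda>i. x0), (\<lambda>i. x0), (\<lambda>i. 0))"
| "edm W \<alpha> \<beta> x0 gF Xi (Suc t) =
     (case edm W \<alpha> \<beta> x0 gF Xi t of (Xp, Xc, Mp) \<Rightarrow>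
        (let Mc = (\<lambda>i. \<beta> *\<^sub>R Mp i + (1 - \<beta>) *\<^sub>R gF i (Xc i) (Xi t i))
         in (Xc, mix W (\<lambda>i. 2 *\<^sub>R Xc i - Xp i - \<alpha> *\<^sub>R Mc i + \<alpha> *\<^sub>R Mp i), Mc)))"

definition edmX where "edmX W \<alpha> \<beta> x0 gF Xi t = fst (snd (edm W \<alpha> \<beta> x0 gF Xi t))"
definition edmXprev where "edmXprev W \<alpha> \<beta> x0 gF Xi t = fst (edm W \<alpha> \<beta> x0 gF Xi t)"
definition edmMprev where "edmMprev W \<alpha> \<beta> x0 gF Xi t = snd (snd (edm W \<alpha> \<beta> x0 gF Xi t))"

definition edmz where
  "edmz W \<alpha> \<beta> x0 gF Xi t =
     (if t = 0 then avg (edmX W \<alpha> \<beta> x0 gF Xi 0)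
      else (1 / (1 - \<beta>)) *\<^sub>R avg (edmX W \<alpha> \<beta> x0 gF Xi t)
           - (\<beta> / (1 - \<beta>)) *\<^sub>R avg (edmX W \<alpha> \<beta> x0 gF Xi (t - 1)))"

definition floc :: "('n \<Rightarrow> real^'d \<Rightarrow> 'p \<Rightarrow> real) \<Rightarrow> ('n \<Rightarrow> 'p measure) \<Rightarrow> 'n \<Rightarrow> real^'d \<Rightarrow> real" where
  "floc F D i x = (\<integral>\<xi>. F i x \<xi> \<partial>D i)"

definition fglob :: "('n::finite \<Rightarrow> real^'d \<Rightarrow> 'p \<Rightarrow> real) \<Rightarrow> ('n \<Rightarrow> 'p measure) \<Rightarrow> real^'d \<Rightarrow> real" where
  "fglob F D x = (1 / real CARD('n)) * (\<Sum>i\<in>UNIV. floc F D i x)"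

definition fstar where "fstar F D = (INF x. fglob F D x)"

definition filt :: "'w measure \<Rightarrow> ('n \<Rightarrow> 'p measure) \<Rightarrow> ('n \<Rightarrow> nat \<Rightarrow> 'w \<Rightarrow> 'p) \<Rightarrow> nat \<Rightarrow> 'w measure" where
  "filt M D \<xi> t = sigma (space M) {\<xi> i s -` A \<inter> space M | i s A. s < t \<and> A \<in> sets (D i)}"

end

theory Submission
  imports Defs
begin

lemma descent_lemma:
  fixes f :: "'a::real_inner \<Rightarrow> real" and g :: "'a \<Rightarrow> 'a"
  assumes d: "\<And>x. (f has_derivative (\<lambda>h. g x \<bullet> h)) (at x)"
    and lip: "\<And>x y. norm (g x - g y) \<le> L * norm (x - y)"
  shows "f y \<le> f x + g x \<bullet> (y - x) + L/2 * (norm (y - x))\<^sup>2"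
proof -
  define d where "d = y - x"
  define \<phi> where "\<phi> s = f (x + s *\<^sub>R d) - s * (g x \<bullet> d) - L/2 * s^2 * (norm d)^2" for s
  have fd: "((\<lambda>s. f (x + s *\<^sub>R d)) has_real_derivative (g (x + s *\<^sub>R d) \<bullet> d)) (at s)" for s
  proof -
    have 1: "((\<lambda>s. x + s *\<^sub>R d) has_derivative (\<lambda>h. h *\<^sub>R d)) (at s)"
      by (auto intro!: derivative_eq_intros)
    have "((\<lambda>s. f (x + s *\<^sub>R d)) has_derivative (\<lambda>h. g (x + s *\<^sub>R d) \<bullet> (h *\<^sub>R d))) (at s)"
      using has_derivative_compose[OF 1 d] by simp
    moreover have "(\<lambda>h. g (x + s *\<^sub>R d) \<bullet> (h *\<^sub>R d)) = (*) (g (x + s *\<^sub>R d) \<bullet> d)"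
      by (auto simp: fun_eq_iff)
    ultimately show ?thesis by (simp add: has_field_derivative_def)
  qed
  have der: "(\<phi> has_real_derivative (g (x + s *\<^sub>R d) \<bullet> d - g x \<bullet> d - L/2 * (2 * s) * (norm d)^2)) (at s)" for s
    unfolding \<phi>_def[abs_def]
    by (auto intro!: derivative_eq_intros fd)
  have nonpos: "g (x + s *\<^sub>R d) \<bullet> d - g x \<bullet> d - L/2 * (2 * s) * (norm d)^2 \<le> 0" if "0 \<le> s" for s
  proof -
    have "g (x + s *\<^sub>R d) \<bullet> d - g x \<bullet> d = (g (x + s *\<^sub>R d) - g x) \<bullet> d" by (simp add: inner_diff_left)
    also have "\<dots> \<le> norm (g (x + s *\<^sub>R d) - g x) * norm d" by (rule norm_cauchy_schwarz)
    also have "\<dots> \<le> (L * norm (s *\<^sub>R d)) * norm d"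
      using lip[of "x + s *\<^sub>R d" x] by (intro mult_right_mono) auto
    also have "\<dots> = L * s * (norm d)^2" using that by (simp add: power2_eq_square)
    finally show ?thesis by simp
  qed
  have "\<phi> 1 \<le> \<phi> 0"
  proof (rule DERIV_nonpos_imp_nonincreasing[of 0 1])
    fix s :: real assume "0 \<le> s" "s \<le> 1"
    then show "\<exists>y. (\<phi> has_real_derivative y) (at s) \<and> y \<le> 0"
      using der[of s] nonpos[of s] by blast
  qed simp
  then show ?thesis unfolding \<phi>_def d_def by (simp add: algebra_simps)
qed

lemma fglob_deriv:
  fixes F :: "'n::finite \<Rightarrow> real^'d \<Rightarrow> 'p \<Rightarrow> real"
  assumes "\<And>i x. (floc F D i has_derivative (\<lambda>h. gf i x \<bullet> h)) (at x)"
  shows "(fglob F D has_derivative (\<lambda>h. ((1 / real CARD('n)) *\<^sub>R (\<Sum>i\<in>UNIV. gf i x)) \<bullet> h)) (at x)"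
proof -
  have "((\<lambda>x. \<Sum>i\<in>UNIV. floc F D i x) has_derivative (\<lambda>h. \<Sum>i\<in>UNIV. gf i x \<bullet> h)) (at x)"
    by (rule has_derivative_sum) (use assms in auto)
  then have "((\<lambda>x. (1 / real CARD('n)) * (\<Sum>i\<in>UNIV. floc F D i x)) has_derivative
       (\<lambda>h. (1 / real CARD('n)) * (\<Sum>i\<in>UNIV. gf i x \<bullet> h))) (at x)"
    by (rule has_derivative_mult_right)
  moreover have "(\<lambda>h. (1 / real CARD('n)) * (\<Sum>i\<in>UNIV. gf i x \<bullet> h)) =
     (\<lambda>h. ((1 / real CARD('n)) *\<^sub>R (\<Sum>i\<in>UNIV. gf i x)) \<bullet> h)"
    by (simp add: inner_sum_left fun_eq_iff)
  ultimately show ?thesis by (simp add: fglob_def[abs_def])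
qed

lemma jensen_norm:
  fixes v :: "'n::finite \<Rightarrow> 'a::real_normed_vector"
  shows "(norm ((1 / real CARD('n)) *\<^sub>R (\<Sum>k\<in>UNIV. v k)))\<^sup>2 \<le> (1 / real CARD('n)) * (\<Sum>k\<in>UNIV. (norm (v k))\<^sup>2)"
proof -
  let ?n = "real CARD('n)"
  have n: "?n > 0" by simp
  have "norm ((1 / ?n) *\<^sub>R (\<Sum>k\<in>UNIV. v k)) \<le> (1 / ?n) * (\<Sum>k\<in>UNIV. norm (v k))"
    using norm_sum[of v UNIV] n by (simp add: divide_simps)
  then have "(norm ((1 / ?n) *\<^sub>R (\<Sum>k\<in>UNIV. v k)))\<^sup>2 \<le> ((1 / ?n) * (\<Sum>k\<in>UNIV. norm (v k)))\<^sup>2"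
    by (intro power_mono) auto
  also have "\<dots> = (1/?n)^2 * (\<Sum>k\<in>UNIV. norm (v k))\<^sup>2" by (simp add: power_mult_distrib field_simps)
  also have "\<dots> \<le> (1/?n)^2 * ((\<Sum>k\<in>UNIV. (norm (v k))\<^sup>2) * ?n)"
    using sum_squared_le_sum_of_squares[of "\<lambda>k. norm (v k)" UNIV]
    by (intro mult_left_mono) auto
  also have "\<dots> = (1 / ?n) * (\<Sum>k\<in>UNIV. (norm (v k))\<^sup>2)" using n by (simp add: power2_eq_square field_simps)
  finally show ?thesis .
qed

lemma sum_sq_split:
  fixes x :: "'n::finite \<Rightarrow> 'a::real_inner"
  shows "(\<Sum>k\<in>UNIV. (norm (z - x k))\<^sup>2) = real CARD('n) * (norm (z - (1 / real CARD('n)) *\<^sub>R (\<Sum>k\<in>UNIV. x k)))\<^sup>2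
     + (\<Sum>k\<in>UNIV. (norm (x k - (1 / real CARD('n)) *\<^sub>R (\<Sum>k\<in>UNIV. x k)))\<^sup>2)"
proof -
  let ?n = "real CARD('n)"
  define xb where "xb = (1 / ?n) *\<^sub>R (\<Sum>k\<in>UNIV. x k)"
  have sx: "(\<Sum>k\<in>UNIV. x k) = ?n *\<^sub>R xb" unfolding xb_def by simp
  have "(norm (z - x k))\<^sup>2 = (norm (z - xb))\<^sup>2 - 2 * ((z - xb) \<bullet> (x k - xb)) + (norm (x k - xb))\<^sup>2" for k
  proof -
    have "z - x k = (z - xb) - (x k - xb)" by simp
    then show ?thesis by (simp only: power2_norm_eq_inner inner_diff_left inner_diff_right) (simp add: inner_commute)
  qed
  then have "(\<Sum>k\<in>UNIV. (norm (z - x k))\<^sup>2) = (\<Sum>k\<in>(UNIV::'n set). (norm (z - xb))\<^sup>2) - 2 * (\<Sum>k\<in>UNIV. (z - xb) \<bullet> (x k - xb)) + (\<Sum>k\<in>UNIV. (norm (x k - xb))\<^sup>2)"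
    by (simp add: sum.distrib sum_subtractf sum_distrib_left)
  moreover have "(\<Sum>k\<in>UNIV. (z - xb) \<bullet> (x k - xb)) = (z - xb) \<bullet> (\<Sum>k\<in>UNIV. x k - xb)"
    by (simp add: inner_sum_right)
  moreover have "(\<Sum>k\<in>UNIV. x k - xb) = 0" by (simp add: sum_subtractf sx sum_constant_scaleR)
  ultimately show ?thesis by (simp add: xb_def)
qed

lemma step_ineq:
  fixes a b e z :: "'a::real_inner" and f :: "'a \<Rightarrow> real"
  assumes desc: "f (z - \<alpha> *\<^sub>R (b + e)) \<le> f z + a \<bullet> ((z - \<alpha> *\<^sub>R (b + e)) - z) + L/2 * (norm ((z - \<alpha> *\<^sub>R (b + e)) - z))\<^sup>2"
    and PL: "2 * \<mu> * (f z - fs) \<le> (norm a)\<^sup>2" and ap: "\<alpha> > 0"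
  shows "f (z - \<alpha> *\<^sub>R (b + e)) - fs \<le> (1 - \<alpha> * \<mu>) * (f z - fs) - \<alpha> * (1 - \<alpha> * L) / 2 * (norm b)\<^sup>2
     + \<alpha> / 2 * (norm (a - b))\<^sup>2 + (- \<alpha> * (a \<bullet> e) + L * \<alpha>\<^sup>2 * (b \<bullet> e) + L * \<alpha>\<^sup>2 / 2 * (norm e)\<^sup>2)"
proof -
  have h1: "(norm ((z - \<alpha> *\<^sub>R (b + e)) - z))\<^sup>2 = \<alpha>\<^sup>2 * ((norm b)\<^sup>2 + 2 * (b \<bullet> e) + (norm e)\<^sup>2)"
  proof -
    have "(z - \<alpha> *\<^sub>R (b + e)) - z = - (\<alpha> *\<^sub>R (b + e))" by simp
    then have "(norm ((z - \<alpha> *\<^sub>R (b + e)) - z))\<^sup>2 = \<alpha>\<^sup>2 * (norm (b + e))\<^sup>2"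
      by (simp only: norm_minus_cancel norm_scaleR power_mult_distrib power2_abs)
    moreover have "(norm (b + e))\<^sup>2 = (norm b)\<^sup>2 + 2 * (b \<bullet> e) + (norm e)\<^sup>2"
      by (simp add: power2_norm_eq_inner inner_add_left inner_add_right inner_commute)
    ultimately show ?thesis by simp
  qed
  have h2: "a \<bullet> ((z - \<alpha> *\<^sub>R (b + e)) - z) = - \<alpha> * (a \<bullet> b) - \<alpha> * (a \<bullet> e)"
    by (simp add: inner_add_right algebra_simps)
  have h3: "(norm (a - b))\<^sup>2 = (norm a)\<^sup>2 - 2 * (a \<bullet> b) + (norm b)\<^sup>2"
    by (simp add: power2_norm_eq_inner inner_diff_left inner_diff_right inner_commute)
  have h4: "\<alpha> * \<mu> * (f z - fs) \<le> \<alpha> / 2 * (norm a)\<^sup>2"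
    using mult_left_mono[OF PL, of "\<alpha>/2"] ap by (simp add: algebra_simps)
  have d': "f (z - \<alpha> *\<^sub>R (b + e)) \<le> f z - \<alpha> * (a \<bullet> b) - \<alpha> * (a \<bullet> e) + L/2 * (\<alpha>\<^sup>2 * ((norm b)\<^sup>2 + 2 * (b \<bullet> e) + (norm e)\<^sup>2))"
    using desc h1 h2 by simp
  have r: "(1 - \<alpha> * \<mu>) * (f z - fs) - \<alpha> * (1 - \<alpha> * L) / 2 * (norm b)\<^sup>2
     + \<alpha> / 2 * (norm (a - b))\<^sup>2 + (- \<alpha> * (a \<bullet> e) + L * \<alpha>\<^sup>2 * (b \<bullet> e) + L * \<alpha>\<^sup>2 / 2 * (norm e)\<^sup>2)
     = (f z - fs) - \<alpha> * \<mu> * (f z - fs) + \<alpha> / 2 * (norm a)\<^sup>2 - \<alpha> * (a \<bullet> b) - \<alpha> * (a \<bullet> e) + L/2 * (\<alpha>\<^sup>2 * ((norm b)\<^sup>2 + 2 * (b \<bullet> e) + (norm e)\<^sup>2))"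
    unfolding h3 by (simp add: field_simps power2_eq_square)
  show ?thesis unfolding r using d' h4 by linarith
qed

lemma grad_bound:
  fixes gf :: "'n::finite \<Rightarrow> 'a::real_inner \<Rightarrow> 'a"
  assumes smooth: "\<And>i x y. norm (gf i x - gf i y) \<le> L * norm (x - y)"
  shows "(norm ((1 / real CARD('n)) *\<^sub>R (\<Sum>i\<in>UNIV. gf i z) - (1 / real CARD('n)) *\<^sub>R (\<Sum>i\<in>UNIV. gf i (x i))))\<^sup>2
    \<le> L\<^sup>2 * ((norm (z - (1 / real CARD('n)) *\<^sub>R (\<Sum>k\<in>UNIV. x k)))\<^sup>2
       + (1 / real CARD('n)) * (\<Sum>k\<in>UNIV. (norm (x k - (1 / real CARD('n)) *\<^sub>R (\<Sum>k\<in>UNIV. x k)))\<^sup>2))"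
proof -
  let ?n = "real CARD('n)"
  have "(1 / ?n) *\<^sub>R (\<Sum>i\<in>UNIV. gf i z) - (1 / ?n) *\<^sub>R (\<Sum>i\<in>UNIV. gf i (x i))
      = (1 / ?n) *\<^sub>R (\<Sum>i\<in>UNIV. gf i z - gf i (x i))"
    by (simp add: sum_subtractf scaleR_diff_right)
  then have "(norm ((1 / ?n) *\<^sub>R (\<Sum>i\<in>UNIV. gf i z) - (1 / ?n) *\<^sub>R (\<Sum>i\<in>UNIV. gf i (x i))))\<^sup>2
      \<le> (1 / ?n) * (\<Sum>k\<in>UNIV. (norm (gf k z - gf k (x k)))\<^sup>2)"
    using jensen_norm[of "\<lambda>i. gf i z - gf i (x i)"] by simp
  also have "\<dots> \<le> (1 / ?n) * (\<Sum>k\<in>UNIV. L\<^sup>2 * (norm (z - x k))\<^sup>2)"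
  proof (intro mult_left_mono sum_mono)
    fix k
    have "norm (gf k z - gf k (x k)) \<le> L * norm (z - x k)" by (rule smooth)
    then have "(norm (gf k z - gf k (x k)))\<^sup>2 \<le> (L * norm (z - x k))\<^sup>2" by (intro power_mono) auto
    then show "(norm (gf k z - gf k (x k)))\<^sup>2 \<le> L\<^sup>2 * (norm (z - x k))\<^sup>2" by (simp add: power_mult_distrib)
  qed simp
  also have "\<dots> = L\<^sup>2 * ((1 / ?n) * (\<Sum>k\<in>UNIV. (norm (z - x k))\<^sup>2))"
    by (simp add: sum_distrib_left)
  also have "\<dots> = L\<^sup>2 * ((norm (z - (1 / ?n) *\<^sub>R (\<Sum>k\<in>UNIV. x k)))\<^sup>2
       + (1 / ?n) * (\<Sum>k\<in>UNIV. (norm (x k - (1 / ?n) *\<^sub>R (\<Sum>k\<in>UNIV. x k)))\<^sup>2))"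
    unfolding sum_sq_split[of z x] by (simp add: field_simps)
  finally show ?thesis .
qed

lemma avg_mix:
  assumes "\<And>j. (\<Sum>i\<in>UNIV. W $ i $ j) = 1"
  shows "avg (mix W X) = avg X"
proof -
  have "(\<Sum>i\<in>UNIV. \<Sum>j\<in>UNIV. W $ i $ j *\<^sub>R X j) = (\<Sum>j\<in>UNIV. \<Sum>i\<in>UNIV. W $ i $ j *\<^sub>R X j)"
    by (rule sum.swap)
  also have "\<dots> = (\<Sum>j\<in>UNIV. (\<Sum>i\<in>UNIV. W $ i $ j) *\<^sub>R X j)" by (simp add: scaleR_sum_left)
  also have "\<dots> = (\<Sum>j\<in>UNIV. X j)" using assms by simp
  finally show ?thesis by (simp add: avg_def mix_def)
qed

lemma avg_add: "avg (\<lambda>i. a i + b i) = avg a + avg b"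
  by (simp add: avg_def sum.distrib scaleR_add_right)
lemma avg_diff: "avg (\<lambda>i. a i - b i) = avg a - avg b"
  by (simp add: avg_def sum_subtractf scaleR_diff_right)
lemma avg_scale: "avg (\<lambda>i. c *\<^sub>R a i) = c *\<^sub>R avg a"
  by (simp add: avg_def scaleR_sum_right)
lemma avg_const: "avg (\<lambda>i::'n::finite. x) = x"
  by (simp add: avg_def sum_constant_scaleR del: sum_constant)

lemma edm_Suc_parts:
  "edmXprev W \<alpha> \<beta> x0 gF Xi (Suc s) = edmX W \<alpha> \<beta> x0 gF Xi s"
  "edmMprev W \<alpha> \<beta> x0 gF Xi (Suc s) = (\<lambda>i. \<beta> *\<^sub>R edmMprev W \<alpha> \<beta> x0 gF Xi s i
       + (1 - \<beta>) *\<^sub>R gF i (edmX W \<alpha> \<beta> x0 gF Xi s i) (Xi s i))"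
  "edmX W \<alpha> \<beta> x0 gF Xi (Suc s) = mix W (\<lambda>i. 2 *\<^sub>R edmX W \<alpha> \<beta> x0 gF Xi s i - edmXprev W \<alpha> \<beta> x0 gF Xi s i
       - \<alpha> *\<^sub>R edmMprev W \<alpha> \<beta> x0 gF Xi (Suc s) i + \<alpha> *\<^sub>R edmMprev W \<alpha> \<beta> x0 gF Xi s i)"
  by (cases "edm W \<alpha> \<beta> x0 gF Xi s"; simp add: edmXprev_def edmX_def edmMprev_def Let_def)+

lemma edm_0_parts:
  "edmXprev W \<alpha> \<beta> x0 gF Xi 0 = (\<lambda>i. x0)" "edmX W \<alpha> \<beta> x0 gF Xi 0 = (\<lambda>i. x0)"
  "edmMprev W \<alpha> \<beta> x0 gF Xi 0 = (\<lambda>i. 0)"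
  by (simp_all add: edmXprev_def edmX_def edmMprev_def)

lemma edm_cong:
  "(\<And>s'. s' < s \<Longrightarrow> Xi s' = Xi' s') \<Longrightarrow> edm W \<alpha> \<beta> x0 gF Xi s = edm W \<alpha> \<beta> x0 gF Xi' s"
proof (induction s)
  case 0 then show ?case by simp
next
  case (Suc s)
  then have "edm W \<alpha> \<beta> x0 gF Xi s = edm W \<alpha> \<beta> x0 gF Xi' s" by simp
  moreover have "Xi s = Xi' s" using Suc by simp
  ultimately show ?case by simp
qed

context
  fixes W :: "real^'n::finite^'n" and \<alpha> \<beta> :: real and x0 :: "real^'d" and gF :: "'n \<Rightarrow> real^'d \<Rightarrow> 'p \<Rightarrow> real^'d"
    and Xi :: "nat \<Rightarrow> 'n \<Rightarrow> 'p"
  assumes colsum: "\<And>j. (\<Sum>i\<in>UNIV. W $ i $ j) = 1"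
begin

lemma avg_invariant:
  "avg (edmX W \<alpha> \<beta> x0 gF Xi s) = avg (edmXprev W \<alpha> \<beta> x0 gF Xi s) - \<alpha> *\<^sub>R avg (edmMprev W \<alpha> \<beta> x0 gF Xi s)"
proof (induction s)
  case 0 then show ?case by (simp add: edm_0_parts avg_const)
next
  case (Suc s)
  have ih: "avg (edmXprev W \<alpha> \<beta> x0 gF Xi s) = avg (edmX W \<alpha> \<beta> x0 gF Xi s) + \<alpha> *\<^sub>R avg (edmMprev W \<alpha> \<beta> x0 gF Xi s)"
    using Suc.IH by simp
  show ?case
    unfolding edm_Suc_parts(1) edm_Suc_parts(3)[of W \<alpha> \<beta> x0 gF Xi s] avg_mix[OF colsum]
    by (simp add: avg_add avg_diff avg_scale ih) (simp add: algebra_simps scaleR_2)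
qed

lemma avg_step:
  "avg (edmX W \<alpha> \<beta> x0 gF Xi (Suc s)) = avg (edmX W \<alpha> \<beta> x0 gF Xi s) - \<alpha> *\<^sub>R avg (edmMprev W \<alpha> \<beta> x0 gF Xi (Suc s))"
  using avg_invariant[of "Suc s"] by (simp add: edm_Suc_parts(1))

lemma z_formula:
  assumes "\<beta> \<noteq> 1"
  shows "edmz W \<alpha> \<beta> x0 gF Xi s = (1 / (1 - \<beta>)) *\<^sub>R (avg (edmX W \<alpha> \<beta> x0 gF Xi s) - \<beta> *\<^sub>R avg (edmXprev W \<alpha> \<beta> x0 gF Xi s))"
proof (cases s)
  case 0
  have "1 - \<beta> \<noteq> 0" using assms by simp
  then have "(1 / (1 - \<beta>)) *\<^sub>R (x0 - \<beta> *\<^sub>R x0) = x0"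
  proof -
    have "x0 - \<beta> *\<^sub>R x0 = (1 - \<beta>) *\<^sub>R x0" by (simp add: algebra_simps)
    then show ?thesis using \<open>1 - \<beta> \<noteq> 0\<close> by simp
  qed
  then show ?thesis using 0 by (simp add: edmz_def edm_0_parts avg_const)
next
  case (Suc k)
  then show ?thesis by (simp add: edmz_def edm_Suc_parts(1) scaleR_diff_right)
qed

lemma z_step:
  assumes "\<beta> \<noteq> 1"
  shows "edmz W \<alpha> \<beta> x0 gF Xi (Suc s) = edmz W \<alpha> \<beta> x0 gF Xi s
     - \<alpha> *\<^sub>R avg (\<lambda>i. gF i (edmX W \<alpha> \<beta> x0 gF Xi s i) (Xi s i))"
proof -
  let ?X = "avg (edmX W \<alpha> \<beta> x0 gF Xi s)" and ?P = "avg (edmXprev W \<alpha> \<beta> x0 gF Xi s)"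
    and ?M = "avg (edmMprev W \<alpha> \<beta> x0 gF Xi s)" and ?G = "avg (\<lambda>i. gF i (edmX W \<alpha> \<beta> x0 gF Xi s i) (Xi s i))"
  have nz: "1 - \<beta> \<noteq> 0" using assms by simp
  have X1: "avg (edmX W \<alpha> \<beta> x0 gF Xi (Suc s)) = ?X - \<alpha> *\<^sub>R (\<beta> *\<^sub>R ?M + (1 - \<beta>) *\<^sub>R ?G)"
    unfolding avg_step edm_Suc_parts(2) by (simp add: avg_add avg_scale)
  have inv: "?P = ?X + \<alpha> *\<^sub>R ?M" using avg_invariant[of s] by simp
  have "edmz W \<alpha> \<beta> x0 gF Xi (Suc s) = (1 / (1 - \<beta>)) *\<^sub>R (avg (edmX W \<alpha> \<beta> x0 gF Xi (Suc s)) - \<beta> *\<^sub>R ?X)"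
    by (simp add: z_formula[OF assms] edm_Suc_parts(1))
  also have "\<dots> = (1 / (1 - \<beta>)) *\<^sub>R (?X - \<beta> *\<^sub>R ?P) - \<alpha> *\<^sub>R ?G"
  proof -
    have "avg (edmX W \<alpha> \<beta> x0 gF Xi (Suc s)) - \<beta> *\<^sub>R ?X = (?X - \<beta> *\<^sub>R ?P) - ((1 - \<beta>) * \<alpha>) *\<^sub>R ?G"
      unfolding X1 by (simp add: inv algebra_simps)
    then show ?thesis using nz by (simp add: scaleR_diff_right)
  qed
  finally show ?thesis by (simp add: z_formula[OF assms])
qed

lemma z_minus_avg:
  assumes "\<beta> \<noteq> 1"
  shows "edmz W \<alpha> \<beta> x0 gF Xi s - avg (edmX W \<alpha> \<beta> x0 gF Xi s) = - (\<alpha> * \<beta> / (1 - \<beta>)) *\<^sub>R avg (edmMprev W \<alpha> \<beta> x0 gF Xi s)"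
proof -
  let ?X = "avg (edmX W \<alpha> \<beta> x0 gF Xi s)" and ?P = "avg (edmXprev W \<alpha> \<beta> x0 gF Xi s)"
    and ?M = "avg (edmMprev W \<alpha> \<beta> x0 gF Xi s)"
  have nz: "1 - \<beta> \<noteq> 0" using assms by simp
  have inv: "?P = ?X + \<alpha> *\<^sub>R ?M" using avg_invariant[of s] by simp
  have "edmz W \<alpha> \<beta> x0 gF Xi s - ?X = (1 / (1 - \<beta>)) *\<^sub>R (?X - \<beta> *\<^sub>R ?P) - ((1 - \<beta>) / (1 - \<beta>)) *\<^sub>R ?X"
    using nz by (simp add: z_formula[OF assms])
  also have "\<dots> = (1 / (1 - \<beta>)) *\<^sub>R ((?X - \<beta> *\<^sub>R ?P) - (1 - \<beta>) *\<^sub>R ?X)"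
    by (simp add: scaleR_diff_right divide_inverse)
  also have "(?X - \<beta> *\<^sub>R ?P) - (1 - \<beta>) *\<^sub>R ?X = - (\<alpha> * \<beta>) *\<^sub>R ?M"
    unfolding inv by (simp add: algebra_simps)
  finally show ?thesis by (simp add: divide_inverse mult.commute)
qed

end

lemma gF_comp_meas:
  assumes gF_meas: "(\<lambda>(x, p). gF x p) \<in> borel_measurable (borel \<Otimes>\<^sub>M Dk)"
    and f: "f \<in> borel_measurable N" and g: "g \<in> measurable N Dk"
  shows "(\<lambda>\<omega>. gF (f \<omega>) (g \<omega>)) \<in> borel_measurable N"
proof -
  have "(\<lambda>\<omega>. (f \<omega>, g \<omega>)) \<in> measurable N (borel \<Otimes>\<^sub>M Dk)"
    using f g by (rule measurable_Pair)
  from measurable_compose[OF this gF_meas] show ?thesis by simp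
qed

lemma edm_meas:
  fixes N :: "'w measure" and \<zeta> :: "'n::finite \<Rightarrow> nat \<Rightarrow> 'w \<Rightarrow> 'p"
    and gF :: "'n \<Rightarrow> real^'d \<Rightarrow> 'p \<Rightarrow> real^'d"
  assumes gF_meas: "\<And>i. (\<lambda>(x, p). gF i x p) \<in> borel_measurable (borel \<Otimes>\<^sub>M D i)"
    and \<zeta>: "\<And>i s. s < T \<Longrightarrow> \<zeta> i s \<in> measurable N (D i)"
  shows "s \<le> T \<Longrightarrow> (\<forall>k. (\<lambda>\<omega>. edmX W \<alpha> \<beta> x0 gF (\<lambda>s i. \<zeta> i s \<omega>) s k) \<in> borel_measurable N
      \<and> (\<lambda>\<omega>. edmXprev W \<alpha> \<beta> x0 gF (\<lambda>s i. \<zeta> i s \<omega>) s k) \<in> borel_measurable N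
      \<and> (\<lambda>\<omega>. edmMprev W \<alpha> \<beta> x0 gF (\<lambda>s i. \<zeta> i s \<omega>) s k) \<in> borel_measurable N)"
proof (induction s)
  case 0 then show ?case by (simp add: edm_0_parts)
next
  case (Suc s)
  then have IH: "(\<lambda>\<omega>. edmX W \<alpha> \<beta> x0 gF (\<lambda>s i. \<zeta> i s \<omega>) s k) \<in> borel_measurable N"
      "(\<lambda>\<omega>. edmXprev W \<alpha> \<beta> x0 gF (\<lambda>s i. \<zeta> i s \<omega>) s k) \<in> borel_measurable N"
      "(\<lambda>\<omega>. edmMprev W \<alpha> \<beta> x0 gF (\<lambda>s i. \<zeta> i s \<omega>) s k) \<in> borel_measurable N" for k
    by auto
  have sT: "s < T" using Suc by simp
  have G: "(\<lambda>\<omega>. gF k (edmX W \<alpha> \<beta> x0 gF (\<lambda>s i. \<zeta> i s \<omega>) s k) (\<zeta> k s \<omega>)) \<in> borel_measurable N" for k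
    by (rule gF_comp_meas[OF gF_meas IH(1) \<zeta>[OF sT]])
  have Mn: "(\<lambda>\<omega>. edmMprev W \<alpha> \<beta> x0 gF (\<lambda>s i. \<zeta> i s \<omega>) (Suc s) k) \<in> borel_measurable N" for k
    unfolding edm_Suc_parts(2) using IH(3) G by measurable
  have Xn: "(\<lambda>\<omega>. edmX W \<alpha> \<beta> x0 gF (\<lambda>s i. \<zeta> i s \<omega>) (Suc s) k) \<in> borel_measurable N" for k
    unfolding edm_Suc_parts(3) mix_def using IH Mn by measurable
  show ?case using IH(1) Mn Xn by (simp add: edm_Suc_parts(1))
qed

locale edm_ctx = prob_space M
  for M :: "'w measure" +
  fixes D :: "'n::finite \<Rightarrow> 'p measure"
    and \<xi> :: "'n \<Rightarrow> nat \<Rightarrow> 'w \<Rightarrow> 'p"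
    and F :: "'n \<Rightarrow> real^'d \<Rightarrow> 'p \<Rightarrow> real"
    and gF :: "'n \<Rightarrow> real^'d \<Rightarrow> 'p \<Rightarrow> real^'d"
    and gf :: "'n \<Rightarrow> real^'d \<Rightarrow> real^'d"
    and W :: "real^'n^'n"
    and \<alpha> \<beta> L \<mu> \<sigma> :: real
    and x0 :: "real^'d"
  assumes \<xi>_meas: "\<And>i s. \<xi> i s \<in> measurable M (D i)"
    and \<xi>_indep: "indep_vars (\<lambda>(i, s). D i) (\<lambda>(i, s). \<xi> i s) UNIV"
    and gF_meas: "\<And>i. (\<lambda>(x, p). gF i x p) \<in> borel_measurable (borel \<Otimes>\<^sub>M D i)"
    and f_grad: "\<And>i x. (floc F D i has_derivative (\<lambda>h. gf i x \<bullet> h)) (at x)"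
    and W_sym: "transpose W = W"
    and W_stoch: "\<And>i. (\<Sum>j\<in>UNIV. W $ i $ j) = 1"
    and smooth: "\<And>i x y. norm (gf i x - gf i y) \<le> L * norm (x - y)"
    and bdd: "\<And>i. bdd_below (range (floc F D i))"
    and noise: "\<And>s i (x :: 'w \<Rightarrow> real^'d). x \<in> borel_measurable (filt M D \<xi> s) \<Longrightarrow>
        integrable M (\<lambda>\<omega>. (norm (gF i (x \<omega>) (\<xi> i s \<omega>) - gf i (x \<omega>)))\<^sup>2)
      \<and> (\<forall>j. AE \<omega> in M. real_cond_exp M (filt M D \<xi> s)
                (\<lambda>\<omega>. (gF i (x \<omega>) (\<xi> i s \<omega>) - gf i (x \<omega>)) $ j) \<omega> = 0)
      \<and> (AE \<omega> in M. real_cond_exp M (filt M D \<xi> s)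
                (\<lambda>\<omega>. (norm (gF i (x \<omega>) (\<xi> i s \<omega>) - gf i (x \<omega>)))\<^sup>2) \<omega> \<le> \<sigma>\<^sup>2)"
    and \<mu>_pos: "\<mu> > 0"
    and PL: "\<And>x. 2 * \<mu> * (fglob F D x - fstar F D)
                 \<le> (norm ((1 / real CARD('n)) *\<^sub>R (\<Sum>i\<in>UNIV. gf i x)))\<^sup>2"
    and \<alpha>_pos: "\<alpha> > 0"
    and \<beta>_range: "0 \<le> \<beta>" "\<beta> < 1"
begin

abbreviation "gfa x \<equiv> (1 / real CARD('n)) *\<^sub>R (\<Sum>i\<in>UNIV. gf i x)"
abbreviation "Xi \<omega> \<equiv> (\<lambda>s i. \<xi> i s \<omega>)"
abbreviation "XX s \<omega> \<equiv> edmX W \<alpha> \<beta> x0 gF (Xi \<omega>) s"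
abbreviation "XP s \<omega> \<equiv> edmXprev W \<alpha> \<beta> x0 gF (Xi \<omega>) s"
abbreviation "MP s \<omega> \<equiv> edmMprev W \<alpha> \<beta> x0 gF (Xi \<omega>) s"
abbreviation "ZZ s \<omega> \<equiv> edmz W \<alpha> \<beta> x0 gF (Xi \<omega>) s"
abbreviation "fs \<equiv> fstar F D"
abbreviation "ff \<equiv> fglob F D"


lemma L_nonneg: "L \<ge> 0"
proof -
  have "0 \<le> norm (gf undefined 0 - gf undefined (axis (undefined::'d) (1::real)))" by simp
  also have "\<dots> \<le> L * norm (0 - axis (undefined::'d) (1::real))" by (rule smooth)
  finally show ?thesis by (simp add: norm_axis_1)
qed

definition "GG s = {\<xi> i s' -` A \<inter> space M | i s' A. s' < s \<and> A \<in> sets (D i)}"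

lemma GG_sub: "GG s \<subseteq> Pow (space M)" unfolding GG_def by auto

lemma filt_eq: "filt M D \<xi> s = sigma (space M) (GG s)"
  unfolding filt_def GG_def by simp

lemma space_filt[simp]: "space (filt M D \<xi> s) = space M"
  unfolding filt_eq by (simp add: space_measure_of_conv)

lemma sets_filt: "sets (filt M D \<xi> s) = sigma_sets (space M) (GG s)"
  unfolding filt_eq using GG_sub by simp

lemma subalg_filt: "subalgebra M (filt M D \<xi> s)"
proof -
  have "GG s \<subseteq> sets M" unfolding GG_def using \<xi>_meas by (auto intro: measurable_sets)
  then have "sigma_sets (space M) (GG s) \<subseteq> sets M" by (rule sets.sigma_sets_subset)
  then show ?thesis unfolding subalgebra_def sets_filt by simp
qed

lemma fms_filt: "finite_measure_subalgebra M (filt M D \<xi> s)"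
  unfolding finite_measure_subalgebra_def finite_measure_subalgebra_axioms_def
  using subalg_filt finite_measure_axioms by blast

lemma sfs_filt: "sigma_finite_subalgebra M (filt M D \<xi> s)"
  using fms_filt finite_measure_subalgebra_is_sigma_finite by blast

lemma \<xi>_meas_filt: "s' < s \<Longrightarrow> \<xi> i s' \<in> measurable (filt M D \<xi> s) (D i)"
proof (rule measurableI)
  fix x assume "x \<in> space (filt M D \<xi> s)"
  then show "\<xi> i s' x \<in> space (D i)" using measurable_space[OF \<xi>_meas] by simp
next
  fix A assume "A \<in> sets (D i)" "s' < s"
  then have "\<xi> i s' -` A \<inter> space M \<in> GG s" unfolding GG_def by blast
  then show "\<xi> i s' -` A \<inter> space (filt M D \<xi> s) \<in> sets (filt M D \<xi> s)"
    unfolding sets_filt by auto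
qed

lemma XX_meas_filt:
  "(\<lambda>\<omega>. XX s \<omega> k) \<in> borel_measurable (filt M D \<xi> s)"
  "(\<lambda>\<omega>. XP s \<omega> k) \<in> borel_measurable (filt M D \<xi> s)"
  "(\<lambda>\<omega>. MP s \<omega> k) \<in> borel_measurable (filt M D \<xi> s)"
  using edm_meas[of gF D s \<xi> "filt M D \<xi> s" s W \<alpha> \<beta> x0, OF gF_meas \<xi>_meas_filt order_refl] by auto

lemma XX_meas:
  "(\<lambda>\<omega>. XX s \<omega> k) \<in> borel_measurable M"
  "(\<lambda>\<omega>. XP s \<omega> k) \<in> borel_measurable M"
  "(\<lambda>\<omega>. MP s \<omega> k) \<in> borel_measurable M"
  using XX_meas_filt measurable_from_subalg[OF subalg_filt] by blast+

lemma G_meas: "(\<lambda>\<omega>. gF k (XX s \<omega> k) (\<xi> k s \<omega>)) \<in> borel_measurable M"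
  by (rule gF_comp_meas[OF gF_meas XX_meas(1) \<xi>_meas])

lemma gf_cont: "continuous_on UNIV (gf i)"
proof -
  have "continuous_on UNIV (gf i)"
    unfolding continuous_on_iff
  proof (intro ballI allI impI)
    fix x :: "real^'d" and e :: real assume "e > 0"
    show "\<exists>d>0. \<forall>x'\<in>UNIV. dist x' x < d \<longrightarrow> dist (gf i x') (gf i x) < e"
    proof (intro exI[of _ "e / (L + 1)"] conjI ballI impI)
      show "e / (L + 1) > 0" using \<open>e > 0\<close> L_nonneg by simp
      fix x' assume "dist x' x < e / (L + 1)"
      have "dist (gf i x') (gf i x) \<le> L * dist x' x" using smooth by (simp add: dist_norm)
      also have "\<dots> \<le> (L + 1) * dist x' x" using L_nonneg by (simp add: mult_right_mono)
      also have "\<dots> < (L + 1) * (e / (L + 1))"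
        using \<open>dist x' x < e / (L + 1)\<close> L_nonneg by (intro mult_strict_left_mono) auto
      also have "\<dots> = e" using L_nonneg by simp
      finally show "dist (gf i x') (gf i x) < e" .
    qed
  qed
  then show ?thesis .
qed

lemma gf_meas[measurable]: "gf i \<in> borel_measurable borel"
  by (rule borel_measurable_continuous_onI[OF gf_cont])

lemma ff_deriv: "(ff has_derivative (\<lambda>h. gfa x \<bullet> h)) (at x)"
  by (rule fglob_deriv[OF f_grad])

lemma ff_cont: "continuous_on UNIV ff"
  using ff_deriv by (meson continuous_at_imp_continuous_on has_derivative_continuous)

lemma ff_meas[measurable]: "ff \<in> borel_measurable borel"
  by (rule borel_measurable_continuous_onI[OF ff_cont])

lemma gfa_lip: "norm (gfa x - gfa y) \<le> L * norm (x - y)"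
proof -
  have "gfa x - gfa y = (1 / real CARD('n)) *\<^sub>R (\<Sum>i\<in>UNIV. gf i x - gf i y)"
    by (simp add: sum_subtractf scaleR_diff_right)
  then have "norm (gfa x - gfa y) \<le> (1 / real CARD('n)) * (\<Sum>i\<in>UNIV. norm (gf i x - gf i y))"
    using norm_sum[of "\<lambda>i. gf i x - gf i y" UNIV] by (simp add: divide_simps)
  also have "\<dots> \<le> (1 / real CARD('n)) * (\<Sum>i\<in>(UNIV::'n set). L * norm (x - y))"
    by (intro mult_left_mono sum_mono smooth) simp
  also have "\<dots> = L * norm (x - y)" by simp
  finally show ?thesis .
qed

lemma descent: "ff y \<le> ff x + gfa x \<bullet> (y - x) + L/2 * (norm (y - x))\<^sup>2"
  by (rule descent_lemma[OF ff_deriv gfa_lip])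

lemma ff_bdd: "bdd_below (range ff)"
proof -
  obtain c where c: "\<And>i x. c i \<le> floc F D i x"
    using bdd unfolding bdd_below_def by (metis rangeI)
  have "(1 / real CARD('n)) * (\<Sum>i\<in>UNIV. c i) \<le> ff x" for x
    unfolding fglob_def by (intro mult_left_mono sum_mono c) simp
  then show ?thesis unfolding bdd_below_def by blast
qed

lemma ff_ge_fs: "fs \<le> ff x"
  unfolding fstar_def using ff_bdd by (simp add: cInf_lower)

end

context edm_ctx begin

lemma sq_comp:
  fixes f :: "'w \<Rightarrow> real^'d"
  assumes [measurable]: "f \<in> borel_measurable M" and i: "integrable M (\<lambda>\<omega>. (norm (f \<omega>))\<^sup>2)"
  shows "integrable M (\<lambda>\<omega>. (f \<omega> $ j)\<^sup>2)" "integrable M (\<lambda>\<omega>. f \<omega> $ j)"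
proof -
  have fj[measurable]: "(\<lambda>x. f x $ j) \<in> borel_measurable M"
    using measurable_compose[OF assms(1) borel_measurable_nth] by simp
  show 1: "integrable M (\<lambda>\<omega>. (f \<omega> $ j)\<^sup>2)"
  proof (rule Bochner_Integration.integrable_bound[OF i])
    show "AE x in M. norm ((f x $ j)\<^sup>2) \<le> norm ((norm (f x))\<^sup>2)"
    proof (intro AE_I2)
      fix x
      have "\<bar>f x $ j\<bar>\<^sup>2 \<le> (norm (f x))\<^sup>2"
        by (rule power_mono) (simp_all add: component_le_norm_cart)
      then show "norm ((f x $ j)\<^sup>2) \<le> norm ((norm (f x))\<^sup>2)" by simp
    qed
  qed measurable
  show "integrable M (\<lambda>\<omega>. f \<omega> $ j)"
    by (rule square_integrable_imp_integrable[OF _ 1]) measurable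
qed

lemma prod_int:
  fixes g h :: "'w \<Rightarrow> real"
  assumes [measurable]: "g \<in> borel_measurable M" "h \<in> borel_measurable M"
    and "integrable M (\<lambda>\<omega>. (g \<omega>)\<^sup>2)" "integrable M (\<lambda>\<omega>. (h \<omega>)\<^sup>2)"
  shows "integrable M (\<lambda>\<omega>. g \<omega> * h \<omega>)"
proof (rule Bochner_Integration.integrable_bound[of _ "\<lambda>\<omega>. (g \<omega>)\<^sup>2 + (h \<omega>)\<^sup>2"])
  show "integrable M (\<lambda>\<omega>. (g \<omega>)\<^sup>2 + (h \<omega>)\<^sup>2)" using assms by auto
  show "AE x in M. norm (g x * h x) \<le> norm ((g x)\<^sup>2 + (h x)\<^sup>2)"
  proof (intro AE_I2)
    fix x
    have "2 * \<bar>g x\<bar> * \<bar>h x\<bar> \<le> (g x)\<^sup>2 + (h x)\<^sup>2"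
      using sum_squares_bound[of "\<bar>g x\<bar>" "\<bar>h x\<bar>"] by simp
    moreover have "0 \<le> \<bar>g x\<bar> * \<bar>h x\<bar>" by simp
    ultimately have "\<bar>g x\<bar> * \<bar>h x\<bar> \<le> (g x)\<^sup>2 + (h x)\<^sup>2" by linarith
    then show "norm (g x * h x) \<le> norm ((g x)\<^sup>2 + (h x)\<^sup>2)" by (simp add: abs_mult)
  qed
qed measurable

definition "ec c k s \<omega> = gF k c (\<xi> k s \<omega>) - gf k c"

lemma ec_meas[measurable]: "ec c k s \<in> borel_measurable M"
proof -
  have "(\<lambda>\<omega>. gF k c (\<xi> k s \<omega>)) \<in> borel_measurable M"
    by (rule gF_comp_meas[OF gF_meas _ \<xi>_meas]) simp
  then show ?thesis unfolding ec_def[abs_def] by measurable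
qed

lemma ec_facts:
  shows "integrable M (\<lambda>\<omega>. (norm (ec c k s \<omega>))\<^sup>2)"
    and "(\<integral>\<omega>. ec c k s \<omega> $ j \<partial>M) = 0"
    and "(\<integral>\<omega>. (norm (ec c k s \<omega>))\<^sup>2 \<partial>M) \<le> \<sigma>\<^sup>2"
proof -
  interpret S: sigma_finite_subalgebra M "filt M D \<xi> s" by (rule sfs_filt)
  have cm: "(\<lambda>\<omega>. c) \<in> borel_measurable (filt M D \<xi> s)" by simp
  note N = noise[OF cm, of k, folded ec_def]
  show int: "integrable M (\<lambda>\<omega>. (norm (ec c k s \<omega>))\<^sup>2)" using N unfolding ec_def by simp
  have ij: "integrable M (\<lambda>\<omega>. ec c k s \<omega> $ j)" by (rule sq_comp(2)[OF ec_meas int])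
  have "(\<integral>\<omega>. ec c k s \<omega> $ j \<partial>M) = (\<integral>\<omega>. real_cond_exp M (filt M D \<xi> s) (\<lambda>\<omega>. ec c k s \<omega> $ j) \<omega> \<partial>M)"
    using S.real_cond_exp_int(2)[OF ij] by simp
  also have "\<dots> = (\<integral>\<omega>. 0 \<partial>M)"
    using N unfolding ec_def by (intro integral_cong_AE) auto
  finally show "(\<integral>\<omega>. ec c k s \<omega> $ j \<partial>M) = 0" by simp
  have "(\<integral>\<omega>. (norm (ec c k s \<omega>))\<^sup>2 \<partial>M) = (\<integral>\<omega>. real_cond_exp M (filt M D \<xi> s) (\<lambda>\<omega>. (norm (ec c k s \<omega>))\<^sup>2) \<omega> \<partial>M)"
    using S.real_cond_exp_int(2)[OF int] by simp
  also have "\<dots> \<le> (\<integral>\<omega>. \<sigma>\<^sup>2 \<partial>M)"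
    using N S.real_cond_exp_int(1)[OF int] unfolding ec_def by (intro integral_mono_AE) auto
  finally show "(\<integral>\<omega>. (norm (ec c k s \<omega>))\<^sup>2 \<partial>M) \<le> \<sigma>\<^sup>2" by (simp add: prob_space)
qed

lemma ec_indep:
  assumes "k \<noteq> l"
  shows "(\<integral>\<omega>. ec c k s \<omega> $ j * ec c' l s \<omega> $ j \<partial>M) = 0"
proof -
  let ?M' = "\<lambda>(i::'n, s::nat). D i" and ?X = "\<lambda>(i, s). \<xi> i s"
  have ind: "indep_var (PiM {(k,s)} ?M') (\<lambda>\<omega>. restrict (\<lambda>i. ?X i \<omega>) {(k,s)})
                      (PiM {(l,s)} ?M') (\<lambda>\<omega>. restrict (\<lambda>i. ?X i \<omega>) {(l,s)})"
    by (rule indep_var_restrict[OF \<xi>_indep]) (use assms in auto)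
  have hm: "(\<lambda>f. ec c k s \<omega>' $ j) \<in> borel_measurable N" for \<omega>' and N :: "'z measure" by simp
  have Y: "(\<lambda>f. (gF q cc (f (q, s)) - gf q cc) $ j) \<in> borel_measurable (PiM {(q,s)} ?M')" for q cc
  proof -
    have 1: "(\<lambda>f. f (q, s)) \<in> measurable (PiM {(q,s)} ?M') (D q)"
      using measurable_component_singleton[of "(q,s)" "{(q,s)}" ?M'] by simp
    have "(\<lambda>f. gF q cc (f (q, s))) \<in> borel_measurable (PiM {(q,s)} ?M')"
      by (rule gF_comp_meas[OF gF_meas _ 1]) simp
    then have "(\<lambda>f. gF q cc (f (q, s)) - gf q cc) \<in> borel_measurable (PiM {(q,s)} ?M')"
      by (rule borel_measurable_diff) simp
    from measurable_compose[OF this borel_measurable_nth] show ?thesis by simp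
  qed
  have ind2: "indep_var borel ((\<lambda>f. (gF k c (f (k, s)) - gf k c) $ j) \<circ> (\<lambda>\<omega>. restrict (\<lambda>i. ?X i \<omega>) {(k,s)}))
     borel ((\<lambda>f. (gF l c' (f (l, s)) - gf l c') $ j) \<circ> (\<lambda>\<omega>. restrict (\<lambda>i. ?X i \<omega>) {(l,s)}))"
    by (rule indep_var_compose[OF ind Y Y])
  have e1: "((\<lambda>f. (gF k c (f (k, s)) - gf k c) $ j) \<circ> (\<lambda>\<omega>. restrict (\<lambda>i. ?X i \<omega>) {(k,s)})) = (\<lambda>\<omega>. ec c k s \<omega> $ j)"
    by (simp add: fun_eq_iff ec_def)
  have e2: "((\<lambda>f. (gF l c' (f (l, s)) - gf l c') $ j) \<circ> (\<lambda>\<omega>. restrict (\<lambda>i. ?X i \<omega>) {(l,s)})) = (\<lambda>\<omega>. ec c' l s \<omega> $ j)"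
    by (simp add: fun_eq_iff ec_def)
  have ind3: "indep_var borel (\<lambda>\<omega>. ec c k s \<omega> $ j) borel (\<lambda>\<omega>. ec c' l s \<omega> $ j)"
    using ind2 unfolding e1 e2 .
  have i1: "integrable M (\<lambda>\<omega>. ec c k s \<omega> $ j)" by (rule sq_comp(2)[OF ec_meas ec_facts(1)])
  have i2: "integrable M (\<lambda>\<omega>. ec c' l s \<omega> $ j)" by (rule sq_comp(2)[OF ec_meas ec_facts(1)])
  show ?thesis using indep_var_lebesgue_integral[OF ind3 i1 i2] ec_facts(2) by simp
qed

end

context edm_ctx begin

lemma norm_sq_vec: "(norm (x :: real^'d))\<^sup>2 = (\<Sum>j\<in>UNIV. (x $ j)\<^sup>2)"
  unfolding power2_norm_eq_inner inner_vec_def by (simp add: power2_eq_square)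

lemma inner_bound:
  fixes c :: "'n \<Rightarrow> real^'d" and v w :: "real^'d" and s :: nat
  defines "eb \<equiv> \<lambda>\<omega>. (1 / real CARD('n)) *\<^sub>R (\<Sum>k\<in>UNIV. ec (c k) k s \<omega>)"
  shows "integrable M (\<lambda>\<omega>. - \<alpha> * (v \<bullet> eb \<omega>) + L * \<alpha>\<^sup>2 * (w \<bullet> eb \<omega>) + L * \<alpha>\<^sup>2 / 2 * (norm (eb \<omega>))\<^sup>2)"
    and "(\<integral>\<omega>. - \<alpha> * (v \<bullet> eb \<omega>) + L * \<alpha>\<^sup>2 * (w \<bullet> eb \<omega>) + L * \<alpha>\<^sup>2 / 2 * (norm (eb \<omega>))\<^sup>2 \<partial>M)
           \<le> \<alpha>\<^sup>2 * L * \<sigma>\<^sup>2 / (2 * real CARD('n))"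
proof -
  let ?n = "real CARD('n)"
  define e where "e k j \<omega> = ec (c k) k s \<omega> $ j" for k j \<omega>
  have em[measurable]: "e k j \<in> borel_measurable M" for k j
    unfolding e_def[abs_def] using measurable_compose[OF ec_meas borel_measurable_nth] by simp
  have ei: "integrable M (e k j)" for k j
    unfolding e_def[abs_def] by (rule sq_comp(2)[OF ec_meas ec_facts(1)])
  have ei2: "integrable M (\<lambda>\<omega>. (e k j \<omega>)\<^sup>2)" for k j
    unfolding e_def by (rule sq_comp(1)[OF ec_meas ec_facts(1)])
  have e0: "(\<integral>\<omega>. e k j \<omega> \<partial>M) = 0" for k j unfolding e_def by (rule ec_facts(2))
  have eprod: "integrable M (\<lambda>\<omega>. e k j \<omega> * e l j \<omega>)" for k l j
    by (rule prod_int[OF em em ei2 ei2])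
  have ebj: "eb \<omega> $ j = (1 / ?n) * (\<Sum>k\<in>UNIV. e k j \<omega>)" for \<omega> j
    unfolding eb_def e_def by (simp add: sum_component)
  have inner_eq: "u \<bullet> eb \<omega> = (1 / ?n) * (\<Sum>k\<in>UNIV. \<Sum>j\<in>UNIV. u $ j * e k j \<omega>)" for u \<omega>
  proof -
    have "u \<bullet> eb \<omega> = (1 / ?n) * (\<Sum>j\<in>UNIV. \<Sum>k\<in>UNIV. u $ j * e k j \<omega>)"
      unfolding inner_vec_def ebj by (simp add: sum_distrib_left algebra_simps)
    also have "\<dots> = (1 / ?n) * (\<Sum>k\<in>UNIV. \<Sum>j\<in>UNIV. u $ j * e k j \<omega>)"
      by (subst sum.swap) (rule refl)
    finally show ?thesis .
  qed
  have inner_int: "integrable M (\<lambda>\<omega>. u \<bullet> eb \<omega>)" for u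
    unfolding inner_eq using ei by auto
  have inner_0: "(\<integral>\<omega>. u \<bullet> eb \<omega> \<partial>M) = 0" for u
    unfolding inner_eq using ei e0 by (simp add: integral_sum)
  have norm_eq: "(norm (eb \<omega>))\<^sup>2 = (1 / ?n)\<^sup>2 * (\<Sum>j\<in>UNIV. \<Sum>k\<in>UNIV. \<Sum>l\<in>UNIV. e k j \<omega> * e l j \<omega>)" for \<omega>
  proof -
    have h: "(eb \<omega> $ j)\<^sup>2 = (1 / ?n)\<^sup>2 * (\<Sum>k\<in>UNIV. \<Sum>l\<in>UNIV. e k j \<omega> * e l j \<omega>)" for j
    proof -
      have "(eb \<omega> $ j)\<^sup>2 = (1 / ?n)\<^sup>2 * ((\<Sum>k\<in>UNIV. e k j \<omega>) * (\<Sum>l\<in>UNIV. e l j \<omega>))"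
        unfolding ebj by (simp add: power_mult_distrib power2_eq_square)
      then show ?thesis by (simp only: sum_product)
    qed
    show ?thesis unfolding norm_sq_vec h by (simp add: sum_distrib_left)
  qed
  have norm_int: "integrable M (\<lambda>\<omega>. (norm (eb \<omega>))\<^sup>2)"
    unfolding norm_eq using eprod by auto
  have cross: "(\<integral>\<omega>. e k j \<omega> * e l j \<omega> \<partial>M) = (if l = k then (\<integral>\<omega>. (e k j \<omega>)\<^sup>2 \<partial>M) else 0)" for k l j
    using ec_indep[of k l, where c="c k" and c'="c l" and s=s and j=j] unfolding e_def by (auto simp: power2_eq_square)
  have "(\<integral>\<omega>. (norm (eb \<omega>))\<^sup>2 \<partial>M) = (1 / ?n)\<^sup>2 * (\<Sum>j\<in>UNIV. \<Sum>k\<in>UNIV. \<Sum>l\<in>UNIV. (\<integral>\<omega>. e k j \<omega> * e l j \<omega> \<partial>M))"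
    unfolding norm_eq using eprod by (simp add: integral_sum)
  also have "\<dots> = (1 / ?n)\<^sup>2 * (\<Sum>j\<in>UNIV. \<Sum>k\<in>UNIV. (\<integral>\<omega>. (e k j \<omega>)\<^sup>2 \<partial>M))"
    unfolding cross by (simp add: sum.delta)
  also have "\<dots> = (1 / ?n)\<^sup>2 * (\<Sum>k\<in>UNIV. (\<integral>\<omega>. (norm (ec (c k) k s \<omega>))\<^sup>2 \<partial>M))"
  proof -
    have "(\<Sum>j\<in>UNIV. (\<integral>\<omega>. (e k j \<omega>)\<^sup>2 \<partial>M)) = (\<integral>\<omega>. (norm (ec (c k) k s \<omega>))\<^sup>2 \<partial>M)" for k
      unfolding norm_sq_vec using ei2 by (simp add: integral_sum e_def)
    then show ?thesis by (subst sum.swap) simp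
  qed
  also have "\<dots> \<le> (1 / ?n)\<^sup>2 * (\<Sum>k\<in>(UNIV::'n set). \<sigma>\<^sup>2)"
    by (intro mult_left_mono sum_mono ec_facts(3)) simp
  also have "\<dots> = \<sigma>\<^sup>2 / ?n" by (simp add: power2_eq_square)
  finally have nb: "(\<integral>\<omega>. (norm (eb \<omega>))\<^sup>2 \<partial>M) \<le> \<sigma>\<^sup>2 / ?n" .
  show "integrable M (\<lambda>\<omega>. - \<alpha> * (v \<bullet> eb \<omega>) + L * \<alpha>\<^sup>2 * (w \<bullet> eb \<omega>) + L * \<alpha>\<^sup>2 / 2 * (norm (eb \<omega>))\<^sup>2)"
    using inner_int norm_int by auto
  have "(\<integral>\<omega>. - \<alpha> * (v \<bullet> eb \<omega>) + L * \<alpha>\<^sup>2 * (w \<bullet> eb \<omega>) + L * \<alpha>\<^sup>2 / 2 * (norm (eb \<omega>))\<^sup>2 \<partial>M)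
      = L * \<alpha>\<^sup>2 / 2 * (\<integral>\<omega>. (norm (eb \<omega>))\<^sup>2 \<partial>M)"
    using inner_int norm_int inner_0 by simp
  also have "\<dots> \<le> L * \<alpha>\<^sup>2 / 2 * (\<sigma>\<^sup>2 / ?n)"
    using nb L_nonneg by (intro mult_left_mono) auto
  also have "\<dots> = \<alpha>\<^sup>2 * L * \<sigma>\<^sup>2 / (2 * ?n)" by simp
  finally show "(\<integral>\<omega>. - \<alpha> * (v \<bullet> eb \<omega>) + L * \<alpha>\<^sup>2 * (w \<bullet> eb \<omega>) + L * \<alpha>\<^sup>2 / 2 * (norm (eb \<omega>))\<^sup>2 \<partial>M)
           \<le> \<alpha>\<^sup>2 * L * \<sigma>\<^sup>2 / (2 * real CARD('n))" .
qed

end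

context edm_ctx begin

definition "L2 u \<longleftrightarrow> u \<in> borel_measurable M \<and> integrable M (\<lambda>\<omega>. (norm (u \<omega> :: real^'d))\<^sup>2)"

lemma L2_add: "L2 u \<Longrightarrow> L2 v \<Longrightarrow> L2 (\<lambda>\<omega>. u \<omega> + v \<omega>)"
  unfolding L2_def
proof (elim conjE, intro conjI)
  assume [measurable]: "u \<in> borel_measurable M" "v \<in> borel_measurable M"
    and iu: "integrable M (\<lambda>\<omega>. (norm (u \<omega>))\<^sup>2)" and iv: "integrable M (\<lambda>\<omega>. (norm (v \<omega>))\<^sup>2)"
  show "(\<lambda>\<omega>. u \<omega> + v \<omega>) \<in> borel_measurable M" by measurable
  show "integrable M (\<lambda>\<omega>. (norm (u \<omega> + v \<omega>))\<^sup>2)"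
  proof (rule Bochner_Integration.integrable_bound[of _ "\<lambda>\<omega>. 2 * (norm (u \<omega>))\<^sup>2 + 2 * (norm (v \<omega>))\<^sup>2"])
    show "integrable M (\<lambda>\<omega>. 2 * (norm (u \<omega>))\<^sup>2 + 2 * (norm (v \<omega>))\<^sup>2)" using iu iv by auto
    show "AE x in M. norm ((norm (u x + v x))\<^sup>2) \<le> norm (2 * (norm (u x))\<^sup>2 + 2 * (norm (v x))\<^sup>2)"
    proof (intro AE_I2)
      fix x
      have "(norm (u x + v x))\<^sup>2 \<le> (norm (u x) + norm (v x))\<^sup>2"
        by (intro power_mono norm_triangle_ineq) simp
      also have "\<dots> \<le> 2 * (norm (u x))\<^sup>2 + 2 * (norm (v x))\<^sup>2"
        using sum_squares_bound[of "norm (u x)" "norm (v x)"] by (simp add: power2_sum)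
      finally show "norm ((norm (u x + v x))\<^sup>2) \<le> norm (2 * (norm (u x))\<^sup>2 + 2 * (norm (v x))\<^sup>2)" by simp
    qed
  qed measurable
qed

lemma L2_scale: "L2 u \<Longrightarrow> L2 (\<lambda>\<omega>. c *\<^sub>R u \<omega>)"
  unfolding L2_def by (auto simp: power_mult_distrib)

lemma L2_diff: "L2 u \<Longrightarrow> L2 v \<Longrightarrow> L2 (\<lambda>\<omega>. u \<omega> - v \<omega>)"
  using L2_add[of u "\<lambda>\<omega>. (-1) *\<^sub>R v \<omega>"] L2_scale[of v "-1"] by simp

lemma L2_const: "L2 (\<lambda>\<omega>. c)"
  unfolding L2_def by simp

lemma L2_sum: "(\<And>k. k \<in> A \<Longrightarrow> L2 (u k)) \<Longrightarrow> L2 (\<lambda>\<omega>. \<Sum>k\<in>A. u k \<omega>)"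
proof (induction A rule: infinite_finite_induct)
  case (infinite A) then show ?case by (simp add: L2_const)
next
  case empty then show ?case by (simp add: L2_const)
next
  case (insert x F) then show ?case by (simp add: L2_add)
qed

lemma L2_avg: "(\<And>k. L2 (\<lambda>\<omega>. u \<omega> k)) \<Longrightarrow> L2 (\<lambda>\<omega>. avg (u \<omega>))"
  unfolding avg_def by (intro L2_scale L2_sum) auto

lemma L2_gf: "L2 u \<Longrightarrow> L2 (\<lambda>\<omega>. gf k (u \<omega>))"
  unfolding L2_def
proof (elim conjE, intro conjI)
  assume [measurable]: "u \<in> borel_measurable M" and iu: "integrable M (\<lambda>\<omega>. (norm (u \<omega>))\<^sup>2)"
  show "(\<lambda>\<omega>. gf k (u \<omega>)) \<in> borel_measurable M" by measurable
  show "integrable M (\<lambda>\<omega>. (norm (gf k (u \<omega>)))\<^sup>2)"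
  proof (rule Bochner_Integration.integrable_bound[of _ "\<lambda>\<omega>. 2 * (norm (gf k 0))\<^sup>2 + 2 * L\<^sup>2 * (norm (u \<omega>))\<^sup>2"])
    show "integrable M (\<lambda>\<omega>. 2 * (norm (gf k 0))\<^sup>2 + 2 * L\<^sup>2 * (norm (u \<omega>))\<^sup>2)" using iu by auto
    show "AE x in M. norm ((norm (gf k (u x)))\<^sup>2) \<le> norm (2 * (norm (gf k 0))\<^sup>2 + 2 * L\<^sup>2 * (norm (u x))\<^sup>2)"
    proof (intro AE_I2)
      fix x
      have "norm (gf k (u x)) \<le> norm (gf k 0) + norm (gf k (u x) - gf k 0)"
        by (metis add.commute diff_add_cancel norm_triangle_ineq)
      also have "\<dots> \<le> norm (gf k 0) + L * norm (u x)" using smooth[of k "u x" 0] by simp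
      finally have "(norm (gf k (u x)))\<^sup>2 \<le> (norm (gf k 0) + L * norm (u x))\<^sup>2"
        by (intro power_mono) auto
      also have "\<dots> \<le> 2 * (norm (gf k 0))\<^sup>2 + 2 * (L * norm (u x))\<^sup>2"
        using sum_squares_bound[of "norm (gf k 0)" "L * norm (u x)"] by (simp add: power2_sum)
      finally show "norm ((norm (gf k (u x)))\<^sup>2) \<le> norm (2 * (norm (gf k 0))\<^sup>2 + 2 * L\<^sup>2 * (norm (u x))\<^sup>2)"
        by (simp add: power_mult_distrib)
    qed
  qed measurable
qed

lemma L2_noise: "L2 (\<lambda>\<omega>. gF k (XX s \<omega> k) (\<xi> k s \<omega>) - gf k (XX s \<omega> k))"
  unfolding L2_def using noise[OF XX_meas_filt(1)] G_meas XX_meas(1) by auto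

lemma L2_iter: "L2 (\<lambda>\<omega>. XX s \<omega> k) \<and> L2 (\<lambda>\<omega>. XP s \<omega> k) \<and> L2 (\<lambda>\<omega>. MP s \<omega> k)"
proof (induction s arbitrary: k)
  case 0 then show ?case by (simp add: edm_0_parts L2_const)
next
  case (Suc s)
  have G: "L2 (\<lambda>\<omega>. gF k (XX s \<omega> k) (\<xi> k s \<omega>))" for k
    using L2_add[OF L2_gf[OF Suc.IH[of k, THEN conjunct1], of k] L2_noise[of k s]] by simp
  have Mn: "L2 (\<lambda>\<omega>. MP (Suc s) \<omega> k)" for k
    unfolding edm_Suc_parts(2) using Suc.IH G by (intro L2_add L2_scale) auto
  have Xn: "L2 (\<lambda>\<omega>. XX (Suc s) \<omega> k)" for k
    unfolding edm_Suc_parts(3) mix_def using Suc.IH Mn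
    by (intro L2_sum L2_scale L2_add L2_diff) auto
  show ?case using Suc.IH Mn Xn by (simp add: edm_Suc_parts(1))
qed

lemma L2_inner: "L2 u \<Longrightarrow> L2 v \<Longrightarrow> integrable M (\<lambda>\<omega>. u \<omega> \<bullet> v \<omega>)"
  unfolding L2_def
proof (elim conjE)
  assume [measurable]: "u \<in> borel_measurable M" "v \<in> borel_measurable M"
    and iu: "integrable M (\<lambda>\<omega>. (norm (u \<omega>))\<^sup>2)" and iv: "integrable M (\<lambda>\<omega>. (norm (v \<omega>))\<^sup>2)"
  show "integrable M (\<lambda>\<omega>. u \<omega> \<bullet> v \<omega>)"
  proof (rule Bochner_Integration.integrable_bound[of _ "\<lambda>\<omega>. (norm (u \<omega>))\<^sup>2 + (norm (v \<omega>))\<^sup>2"])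
    show "integrable M (\<lambda>\<omega>. (norm (u \<omega>))\<^sup>2 + (norm (v \<omega>))\<^sup>2)" using iu iv by auto
    show "AE x in M. norm (u x \<bullet> v x) \<le> norm ((norm (u x))\<^sup>2 + (norm (v x))\<^sup>2)"
    proof (intro AE_I2)
      fix x
      have "\<bar>u x \<bullet> v x\<bar> \<le> norm (u x) * norm (v x)" by (rule Cauchy_Schwarz_ineq2)
      moreover have "2 * (norm (u x) * norm (v x)) \<le> (norm (u x))\<^sup>2 + (norm (v x))\<^sup>2"
        using sum_squares_bound[of "norm (u x)" "norm (v x)"] by simp
      moreover have "0 \<le> norm (u x) * norm (v x)" by simp
      ultimately show "norm (u x \<bullet> v x) \<le> norm ((norm (u x))\<^sup>2 + (norm (v x))\<^sup>2)" by simp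
    qed
  qed measurable
qed

lemma L2_normsq: "L2 u \<Longrightarrow> integrable M (\<lambda>\<omega>. (norm (u \<omega>))\<^sup>2)"
  unfolding L2_def by simp

lemma L2_ff: "L2 u \<Longrightarrow> integrable M (\<lambda>\<omega>. ff (u \<omega>) - fs)"
  unfolding L2_def
proof (elim conjE)
  assume [measurable]: "u \<in> borel_measurable M" and iu: "integrable M (\<lambda>\<omega>. (norm (u \<omega>))\<^sup>2)"
  let ?C = "ff 0 - fs + (norm (gfa 0))\<^sup>2 / 2"
  show "integrable M (\<lambda>\<omega>. ff (u \<omega>) - fs)"
  proof (rule Bochner_Integration.integrable_bound[of _ "\<lambda>\<omega>. ?C + (1 + L) / 2 * (norm (u \<omega>))\<^sup>2"])
    show "integrable M (\<lambda>\<omega>. ?C + (1 + L) / 2 * (norm (u \<omega>))\<^sup>2)" using iu by auto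
    show "AE x in M. norm (ff (u x) - fs) \<le> norm (?C + (1 + L) / 2 * (norm (u x))\<^sup>2)"
    proof (intro AE_I2)
      fix x
      have d: "ff (u x) \<le> ff 0 + gfa 0 \<bullet> (u x - 0) + L/2 * (norm (u x - 0))\<^sup>2" by (rule descent)
      have "gfa 0 \<bullet> u x \<le> norm (gfa 0) * norm (u x)" by (rule norm_cauchy_schwarz)
      also have "\<dots> \<le> (norm (gfa 0))\<^sup>2 / 2 + (norm (u x))\<^sup>2 / 2"
        using sum_squares_bound[of "norm (gfa 0)" "norm (u x)"] by simp
      finally have i: "gfa 0 \<bullet> u x \<le> (norm (gfa 0))\<^sup>2 / 2 + (norm (u x))\<^sup>2 / 2" .
      have lo: "0 \<le> ff (u x) - fs" using ff_ge_fs[of "u x"] by simp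
      have d': "ff (u x) \<le> ff 0 + gfa 0 \<bullet> u x + L/2 * (norm (u x))\<^sup>2" using d by simp
      have e: "(1 + L) / 2 * (norm (u x))\<^sup>2 = (norm (u x))\<^sup>2 / 2 + L/2 * (norm (u x))\<^sup>2"
        by (simp add: field_simps)
      have "ff (u x) - fs \<le> ?C + (1 + L) / 2 * (norm (u x))\<^sup>2"
        unfolding e using d' i by linarith
      then show "norm (ff (u x) - fs) \<le> norm (?C + (1 + L) / 2 * (norm (u x))\<^sup>2)"
        using lo by simp
    qed
  qed measurable
qed

end

context edm_ctx begin

lemma colsum: "(\<Sum>i\<in>UNIV. W $ i $ j) = 1"
proof -
  have "W $ i $ j = W $ j $ i" for i
    using arg_cong[OF W_sym, of "\<lambda>A. A $ i $ j"] by (simp add: transpose_def)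
  then show ?thesis using W_stoch[of j] by simp
qed

lemma beta_ne: "\<beta> \<noteq> 1" using \<beta>_range by simp

lemma ZZ_formula: "ZZ s \<omega> = (1 / (1 - \<beta>)) *\<^sub>R (avg (XX s \<omega>) - \<beta> *\<^sub>R avg (XP s \<omega>))"
  by (rule z_formula[OF colsum beta_ne])

lemma L2_ZZ: "L2 (\<lambda>\<omega>. ZZ s \<omega>)"
  unfolding ZZ_formula using L2_iter by (intro L2_scale L2_diff L2_avg) auto

lemma L2_gfa: "L2 u \<Longrightarrow> L2 (\<lambda>\<omega>. gfa (u \<omega>))"
  by (intro L2_scale L2_sum L2_gf)

lemma EY_bound:
  fixes t :: nat
  defines "bb \<equiv> \<lambda>\<omega>. (1 / real CARD('n)) *\<^sub>R (\<Sum>i\<in>UNIV. gf i (XX t \<omega> i))"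
    and "eb \<equiv> \<lambda>\<omega>. (1 / real CARD('n)) *\<^sub>R (\<Sum>k\<in>UNIV. gF k (XX t \<omega> k) (\<xi> k t \<omega>) - gf k (XX t \<omega> k))"
  shows "integrable M (\<lambda>\<omega>. - \<alpha> * (gfa (ZZ t \<omega>) \<bullet> eb \<omega>) + L * \<alpha>\<^sup>2 * (bb \<omega> \<bullet> eb \<omega>) + L * \<alpha>\<^sup>2 / 2 * (norm (eb \<omega>))\<^sup>2)"
    and "(\<integral>\<omega>. - \<alpha> * (gfa (ZZ t \<omega>) \<bullet> eb \<omega>) + L * \<alpha>\<^sup>2 * (bb \<omega> \<bullet> eb \<omega>) + L * \<alpha>\<^sup>2 / 2 * (norm (eb \<omega>))\<^sup>2 \<partial>M)
          \<le> \<alpha>\<^sup>2 * L * \<sigma>\<^sup>2 / (2 * real CARD('n))"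
proof -
  let ?n = "real CARD('n)"
  let ?K = "\<alpha>\<^sup>2 * L * \<sigma>\<^sup>2 / (2 * ?n)"
  define Y where "Y \<omega> = - \<alpha> * (gfa (ZZ t \<omega>) \<bullet> eb \<omega>) + L * \<alpha>\<^sup>2 * (bb \<omega> \<bullet> eb \<omega>) + L * \<alpha>\<^sup>2 / 2 * (norm (eb \<omega>))\<^sup>2" for \<omega>
  have L2bb: "L2 bb" unfolding bb_def using L2_iter by (intro L2_scale L2_sum L2_gf) auto
  have L2eb: "L2 eb" unfolding eb_def using L2_noise by (intro L2_scale L2_sum) auto
  have L2A: "L2 (\<lambda>\<omega>. gfa (ZZ t \<omega>))" by (rule L2_gfa[OF L2_ZZ])
  show intY: "integrable M (\<lambda>\<omega>. - \<alpha> * (gfa (ZZ t \<omega>) \<bullet> eb \<omega>) + L * \<alpha>\<^sup>2 * (bb \<omega> \<bullet> eb \<omega>) + L * \<alpha>\<^sup>2 / 2 * (norm (eb \<omega>))\<^sup>2)"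
    using L2_inner[OF L2A L2eb] L2_inner[OF L2bb L2eb] L2_normsq[OF L2eb]
    by (intro Bochner_Integration.integrable_add Bochner_Integration.integrable_mult_right)
  then have intY': "integrable M Y" unfolding Y_def .

  define Hs where "Hs = {p :: 'n \<times> nat. snd p < t}"
  define Cs where "Cs = {p :: 'n \<times> nat. snd p = t}"
  define M' where "M' = (\<lambda>(i::'n, s::nat). D i)"
  define X' where "X' = (\<lambda>(i::'n, s::nat). \<xi> i s)"
  define PH where "PH = PiM Hs M'"
  define PA where "PA = PiM Cs M'"
  define Hv where "Hv \<omega> = restrict (\<lambda>p. X' p \<omega>) Hs" for \<omega>
  define Av where "Av \<omega> = restrict (\<lambda>p. X' p \<omega>) Cs" for \<omega>
  have ind: "indep_var PH Hv PA Av"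
    unfolding PH_def PA_def Hv_def Av_def
    by (rule indep_var_restrict[OF \<xi>_indep[folded M'_def X'_def]]) (auto simp: Hs_def Cs_def)
  have M'_eq[simp]: "M' (i, s) = D i" for i s by (simp add: M'_def)
  have X'_eq[simp]: "X' (i, s) = \<xi> i s" for i s by (simp add: X'_def)

  define xc where "xc h k = edmX W \<alpha> \<beta> x0 gF (\<lambda>s i. h (i, s)) t k" for h :: "'n \<times> nat \<Rightarrow> 'p" and k
  define xp where "xp h k = edmXprev W \<alpha> \<beta> x0 gF (\<lambda>s i. h (i, s)) t k" for h :: "'n \<times> nat \<Rightarrow> 'p" and k
  have comp_meas: "(\<lambda>h. h (i, s)) \<in> measurable PH (D i)" if "s < t" for i s
    using measurable_component_singleton[of "(i,s)" Hs M'] that unfolding PH_def Hs_def by simp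
  have xm: "(\<lambda>h. xc h k) \<in> borel_measurable PH" "(\<lambda>h. xp h k) \<in> borel_measurable PH" for k
    using edm_meas[of gF D t "\<lambda>i s h. h (i, s)" PH t W \<alpha> \<beta> x0, OF gF_meas comp_meas order_refl]
    unfolding xc_def xp_def by auto

  define zf where "zf h = (1 / (1 - \<beta>)) *\<^sub>R (avg (xc h) - \<beta> *\<^sub>R avg (xp h))" for h
  define Bf where "Bf h = (1 / ?n) *\<^sub>R (\<Sum>i\<in>UNIV. gf i (xc h i))" for h
  define ebf where "ebf x = (1 / ?n) *\<^sub>R (\<Sum>k\<in>UNIV. gF k (xc (fst x) k) (snd x (k, t)) - gf k (xc (fst x) k))" for x
  define \<Psi> where "\<Psi> x = - \<alpha> * (gfa (zf (fst x)) \<bullet> ebf x) + L * \<alpha>\<^sup>2 * (Bf (fst x) \<bullet> ebf x) + L * \<alpha>\<^sup>2 / 2 * (norm (ebf x))\<^sup>2" for x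

  have xm2[measurable]: "(\<lambda>x. xc (fst x) k) \<in> borel_measurable (PH \<Otimes>\<^sub>M PA)" "(\<lambda>x. xp (fst x) k) \<in> borel_measurable (PH \<Otimes>\<^sub>M PA)" for k
    using measurable_compose[OF measurable_fst xm(1)] measurable_compose[OF measurable_fst xm(2)] by auto
  have am: "(\<lambda>x. snd x (k, t)) \<in> measurable (PH \<Otimes>\<^sub>M PA) (D k)" for k
  proof -
    have "(\<lambda>a. a (k, t)) \<in> measurable PA (D k)"
      using measurable_component_singleton[of "(k,t)" Cs M'] unfolding PA_def Cs_def by simp
    from measurable_compose[OF measurable_snd this] show ?thesis .
  qed
  have gm[measurable]: "(\<lambda>x. gF k (xc (fst x) k) (snd x (k, t))) \<in> borel_measurable (PH \<Otimes>\<^sub>M PA)" for k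
    by (rule gF_comp_meas[OF gF_meas xm2(1) am])
  have zfm[measurable]: "(\<lambda>x. zf (fst x)) \<in> borel_measurable (PH \<Otimes>\<^sub>M PA)"
    unfolding zf_def avg_def by measurable
  have Bfm[measurable]: "(\<lambda>x. Bf (fst x)) \<in> borel_measurable (PH \<Otimes>\<^sub>M PA)"
    unfolding Bf_def by measurable
  have ebfm[measurable]: "ebf \<in> borel_measurable (PH \<Otimes>\<^sub>M PA)"
    unfolding ebf_def by measurable
  have \<Psi>m[measurable]: "\<Psi> \<in> borel_measurable (PH \<Otimes>\<^sub>M PA)"
    unfolding \<Psi>_def by measurable

  have HvAv: "random_variable PH Hv" "random_variable PA Av"
    "distr M PH Hv \<Otimes>\<^sub>M distr M PA Av = distr M (PH \<Otimes>\<^sub>M PA) (\<lambda>x. (Hv x, Av x))"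
    using ind unfolding indep_var_distribution_eq by auto
  have HAm: "(\<lambda>x. (Hv x, Av x)) \<in> measurable M (PH \<Otimes>\<^sub>M PA)" using HvAv by (intro measurable_Pair)
  interpret QH: prob_space "distr M PH Hv" by (rule prob_space_distr[OF HvAv(1)])
  interpret QA: prob_space "distr M PA Av" by (rule prob_space_distr[OF HvAv(2)])
  interpret Q: pair_sigma_finite "distr M PH Hv" "distr M PA Av" ..

  have hist: "edm W \<alpha> \<beta> x0 gF (\<lambda>s i. Hv \<omega> (i, s)) t = edm W \<alpha> \<beta> x0 gF (Xi \<omega>) t" for \<omega>
    by (rule edm_cong) (auto simp: Hv_def Hs_def)
  have xcH: "xc (Hv \<omega>) = XX t \<omega>" "xp (Hv \<omega>) = XP t \<omega>" for \<omega>
    unfolding xc_def xp_def edmX_def edmXprev_def hist by auto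
  have AvE: "Av \<omega> (k, t) = \<xi> k t \<omega>" for \<omega> k by (simp add: Av_def Cs_def)
  have YPsi: "Y \<omega> = \<Psi> (Hv \<omega>, Av \<omega>)" for \<omega>
    unfolding Y_def \<Psi>_def ebf_def Bf_def zf_def eb_def bb_def by (simp add: xcH AvE ZZ_formula)

  have "(\<integral>\<omega>. Y \<omega> \<partial>M) = (\<integral>\<omega>. \<Psi> (Hv \<omega>, Av \<omega>) \<partial>M)" by (simp add: YPsi)
  also have "\<dots> = integral\<^sup>L (distr M (PH \<Otimes>\<^sub>M PA) (\<lambda>x. (Hv x, Av x))) \<Psi>"
    by (rule integral_distr[OF HAm \<Psi>m, symmetric])
  also have "\<dots> = integral\<^sup>L (distr M PH Hv \<Otimes>\<^sub>M distr M PA Av) \<Psi>" by (simp add: HvAv(3))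
  also have "\<dots> = (\<integral>h. (\<integral>a. \<Psi> (h, a) \<partial>distr M PA Av) \<partial>distr M PH Hv)"
  proof -
    have "integrable (distr M (PH \<Otimes>\<^sub>M PA) (\<lambda>x. (Hv x, Av x))) \<Psi>"
      using intY' unfolding integrable_distr_eq[OF HAm \<Psi>m] YPsi .
    then have "integrable (distr M PH Hv \<Otimes>\<^sub>M distr M PA Av) \<Psi>" by (simp add: HvAv(3))
    then show ?thesis by (rule Q.integral_fst'[symmetric])
  qed
  also have "\<dots> \<le> ?K"
  proof -
    have inner: "(\<integral>a. \<Psi> (h, a) \<partial>distr M PA Av) \<le> ?K" if h: "h \<in> space (distr M PH Hv)" for h
    proof -
      have hm: "(\<lambda>a. \<Psi> (h, a)) \<in> borel_measurable PA"
        using measurable_Pair2[OF \<Psi>m, of h] h by simp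
      have "(\<integral>a. \<Psi> (h, a) \<partial>distr M PA Av) = (\<integral>\<omega>. \<Psi> (h, Av \<omega>) \<partial>M)"
        by (rule integral_distr[OF HvAv(2) hm])
      also have "\<dots> = (\<integral>\<omega>. - \<alpha> * (gfa (zf h) \<bullet> ((1 / ?n) *\<^sub>R (\<Sum>k\<in>UNIV. ec (xc h k) k t \<omega>)))
            + L * \<alpha>\<^sup>2 * (Bf h \<bullet> ((1 / ?n) *\<^sub>R (\<Sum>k\<in>UNIV. ec (xc h k) k t \<omega>)))
            + L * \<alpha>\<^sup>2 / 2 * (norm ((1 / ?n) *\<^sub>R (\<Sum>k\<in>UNIV. ec (xc h k) k t \<omega>)))\<^sup>2 \<partial>M)"
        unfolding \<Psi>_def ebf_def ec_def by (simp add: AvE)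
      also have "\<dots> \<le> ?K" by (rule inner_bound(2))
      finally show ?thesis .
    qed
    have K0: "0 \<le> ?K" using L_nonneg by simp
    show ?thesis
    proof (cases "integrable (distr M PH Hv) (\<lambda>h. \<integral>a. \<Psi> (h, a) \<partial>distr M PA Av)")
      case True
      have "(\<integral>h. (\<integral>a. \<Psi> (h, a) \<partial>distr M PA Av) \<partial>distr M PH Hv) \<le> (\<integral>h. ?K \<partial>distr M PH Hv)"
        by (rule integral_mono[OF True]) (use inner in auto)
      also have "\<dots> = ?K" using QH.prob_space by simp
      finally show ?thesis .
    next
      case False
      then show ?thesis using K0 by (simp add: not_integrable_integral_eq)
    qed
  qed
  finally show "(\<integral>\<omega>. - \<alpha> * (gfa (ZZ t \<omega>) \<bullet> eb \<omega>) + L * \<alpha>\<^sup>2 * (bb \<omega> \<bullet> eb \<omega>) + L * \<alpha>\<^sup>2 / 2 * (norm (eb \<omega>))\<^sup>2 \<partial>M) \<le> ?K"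
    unfolding Y_def .
qed

end

context edm_ctx begin

lemma main:
  "(\<integral>\<omega>. ff (ZZ (Suc t) \<omega>) - fs \<partial>M)
     \<le> (1 - \<alpha> * \<mu>) * (\<integral>\<omega>. ff (ZZ t \<omega>) - fs \<partial>M)
       - \<alpha> * (1 - \<alpha> * L) / 2 *
           (\<integral>\<omega>. (norm ((1 / real CARD('n)) *\<^sub>R
               (\<Sum>i\<in>UNIV. gf i (XX t \<omega> i))))\<^sup>2 \<partial>M)
       + \<alpha> * L\<^sup>2 / (2 * real CARD('n)) *
           (\<integral>\<omega>. (\<Sum>i\<in>UNIV. (norm (XX t \<omega> i - avg (XX t \<omega>)))\<^sup>2) \<partial>M)
       + \<alpha> ^ 3 * L\<^sup>2 * \<beta>\<^sup>2 / (2 * (1 - \<beta>)\<^sup>2) *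
           (\<integral>\<omega>. (norm (avg (MP t \<omega>)))\<^sup>2 \<partial>M)
       + \<alpha>\<^sup>2 * L * \<sigma>\<^sup>2 / (2 * real CARD('n))"
proof -
  let ?n = "real CARD('n)"
  define bb where "bb = (\<lambda>\<omega>. (1 / ?n) *\<^sub>R (\<Sum>i\<in>UNIV. gf i (XX t \<omega> i)))"
  define eb where "eb = (\<lambda>\<omega>. (1 / ?n) *\<^sub>R (\<Sum>k\<in>UNIV. gF k (XX t \<omega> k) (\<xi> k t \<omega>) - gf k (XX t \<omega> k)))"
  define Y where "Y = (\<lambda>\<omega>. - \<alpha> * (gfa (ZZ t \<omega>) \<bullet> eb \<omega>) + L * \<alpha>\<^sup>2 * (bb \<omega> \<bullet> eb \<omega>) + L * \<alpha>\<^sup>2 / 2 * (norm (eb \<omega>))\<^sup>2)"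
  define f1 where "f1 = (\<lambda>\<omega>. ff (ZZ t \<omega>) - fs)"
  define f2 where "f2 = (\<lambda>\<omega>. (norm (bb \<omega>))\<^sup>2)"
  define f3 where "f3 = (\<lambda>\<omega>. (\<Sum>i\<in>UNIV. (norm (XX t \<omega> i - avg (XX t \<omega>)))\<^sup>2))"
  define f4 where "f4 = (\<lambda>\<omega>. (norm (avg (MP t \<omega>)))\<^sup>2)"
  define c1 where "c1 = 1 - \<alpha> * \<mu>"
  define c2 where "c2 = \<alpha> * (1 - \<alpha> * L) / 2"
  define c3 where "c3 = \<alpha> * L\<^sup>2 / (2 * ?n)"
  define c4 where "c4 = \<alpha> ^ 3 * L\<^sup>2 * \<beta>\<^sup>2 / (2 * (1 - \<beta>)\<^sup>2)"
  have EY: "integrable M Y" "(\<integral>\<omega>. Y \<omega> \<partial>M) \<le> \<alpha>\<^sup>2 * L * \<sigma>\<^sup>2 / (2 * ?n)"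
    unfolding Y_def bb_def eb_def by (rule EY_bound(1), rule EY_bound(2))
  have L2bb: "L2 bb" unfolding bb_def using L2_iter by (intro L2_scale L2_sum L2_gf) auto
  have i0: "integrable M (\<lambda>\<omega>. ff (ZZ (Suc t) \<omega>) - fs)" by (rule L2_ff[OF L2_ZZ])
  have i1: "integrable M f1" unfolding f1_def by (rule L2_ff[OF L2_ZZ])
  have i2: "integrable M f2" unfolding f2_def by (rule L2_normsq[OF L2bb])
  have i3: "integrable M f3" unfolding f3_def
    using L2_iter by (intro Bochner_Integration.integrable_sum L2_normsq L2_diff L2_avg) auto
  have i4: "integrable M f4" unfolding f4_def
    using L2_iter by (intro L2_normsq L2_avg) auto
  have pw: "ff (ZZ (Suc t) \<omega>) - fs \<le> c1 * f1 \<omega> - c2 * f2 \<omega> + c3 * f3 \<omega> + c4 * f4 \<omega> + Y \<omega>" for \<omega>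
  proof -
    let ?z = "ZZ t \<omega>" and ?x = "XX t \<omega>"
    have avgG: "avg (\<lambda>i. gF i (?x i) (\<xi> i t \<omega>)) = bb \<omega> + eb \<omega>"
      unfolding avg_def bb_def eb_def by (simp add: sum_subtractf scaleR_diff_right)
    have zs: "ZZ (Suc t) \<omega> = ?z - \<alpha> *\<^sub>R (bb \<omega> + eb \<omega>)"
      using z_step[OF colsum beta_ne, of \<alpha> x0 gF "Xi \<omega>" t] unfolding avgG by simp
    have st: "ff (?z - \<alpha> *\<^sub>R (bb \<omega> + eb \<omega>)) - fs \<le> (1 - \<alpha> * \<mu>) * (ff ?z - fs) - \<alpha> * (1 - \<alpha> * L) / 2 * (norm (bb \<omega>))\<^sup>2
     + \<alpha> / 2 * (norm (gfa ?z - bb \<omega>))\<^sup>2 + (- \<alpha> * (gfa ?z \<bullet> eb \<omega>) + L * \<alpha>\<^sup>2 * (bb \<omega> \<bullet> eb \<omega>) + L * \<alpha>\<^sup>2 / 2 * (norm (eb \<omega>))\<^sup>2)"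
      by (rule step_ineq[OF descent PL \<alpha>_pos])
    have gb: "(norm (gfa ?z - bb \<omega>))\<^sup>2 \<le> L\<^sup>2 * ((norm (?z - avg ?x))\<^sup>2 + (1 / ?n) * (\<Sum>k\<in>UNIV. (norm (?x k - avg ?x))\<^sup>2))"
      unfolding bb_def avg_def by (rule grad_bound[OF smooth])
    have zm: "?z - avg ?x = - (\<alpha> * \<beta> / (1 - \<beta>)) *\<^sub>R avg (MP t \<omega>)"
      by (rule z_minus_avg[OF colsum beta_ne])
    have zm2: "(norm (?z - avg ?x))\<^sup>2 = (\<alpha> * \<beta> / (1 - \<beta>))\<^sup>2 * f4 \<omega>"
      unfolding zm f4_def by (simp only: norm_minus_cancel norm_scaleR power_mult_distrib power2_abs power2_minus)
    have "\<alpha> / 2 * (norm (gfa ?z - bb \<omega>))\<^sup>2 \<le> \<alpha> / 2 * (L\<^sup>2 * ((\<alpha> * \<beta> / (1 - \<beta>))\<^sup>2 * f4 \<omega> + (1 / ?n) * f3 \<omega>))"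
      using gb \<alpha>_pos unfolding zm2 f3_def by (intro mult_left_mono) auto
    also have "\<dots> = c3 * f3 \<omega> + c4 * f4 \<omega>"
    proof -
      define DD where "DD = (1 - \<beta>)\<^sup>2"
      have DD: "DD \<noteq> 0" unfolding DD_def using beta_ne by simp
      have e: "(\<alpha> * \<beta> / (1 - \<beta>))\<^sup>2 = \<alpha>\<^sup>2 * \<beta>\<^sup>2 / DD"
        unfolding DD_def by (simp add: power_divide power_mult_distrib)
      show ?thesis unfolding c3_def c4_def e DD_def[symmetric] using DD
        by (simp add: field_simps power2_eq_square power3_eq_cube)
    qed
    finally have "\<alpha> / 2 * (norm (gfa ?z - bb \<omega>))\<^sup>2 \<le> c3 * f3 \<omega> + c4 * f4 \<omega>" .
    then show ?thesis using st unfolding zs c1_def c2_def f1_def f2_def Y_def by linarith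
  qed
  have "(\<integral>\<omega>. ff (ZZ (Suc t) \<omega>) - fs \<partial>M) \<le> (\<integral>\<omega>. c1 * f1 \<omega> - c2 * f2 \<omega> + c3 * f3 \<omega> + c4 * f4 \<omega> + Y \<omega> \<partial>M)"
    using i0 i1 i2 i3 i4 EY(1) pw by (intro integral_mono) auto
  also have "\<dots> = c1 * (\<integral>\<omega>. f1 \<omega> \<partial>M) - c2 * (\<integral>\<omega>. f2 \<omega> \<partial>M) + c3 * (\<integral>\<omega>. f3 \<omega> \<partial>M) + c4 * (\<integral>\<omega>. f4 \<omega> \<partial>M) + (\<integral>\<omega>. Y \<omega> \<partial>M)"
    using i1 i2 i3 i4 EY(1) by simp
  also have "\<dots> \<le> c1 * (\<integral>\<omega>. f1 \<omega> \<partial>M) - c2 * (\<integral>\<omega>. f2 \<omega> \<partial>M) + c3 * (\<integral>\<omega>. f3 \<omega> \<partial>M) + c4 * (\<integral>\<omega>. f4 \<omega> \<partial>M) + \<alpha>\<^sup>2 * L * \<sigma>\<^sup>2 / (2 * ?n)"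
    using EY(2) by simp
  finally show ?thesis unfolding c1_def c2_def c3_def c4_def f1_def f2_def f3_def f4_def bb_def .
qed

end

theorem lemma2:
  fixes M :: "'w measure"
    and D :: "'n::finite \<Rightarrow> 'p measure"
    and \<xi> :: "'n \<Rightarrow> nat \<Rightarrow> 'w \<Rightarrow> 'p"
    and F :: "'n \<Rightarrow> real^'d \<Rightarrow> 'p \<Rightarrow> real"
    and gF :: "'n \<Rightarrow> real^'d \<Rightarrow> 'p \<Rightarrow> real^'d"
    and gf :: "'n \<Rightarrow> real^'d \<Rightarrow> real^'d"
    and W :: "real^'n^'n"
    and \<alpha> \<beta> L \<mu> \<sigma> :: real
    and x0 :: "real^'d"
    and t :: nat
  assumes
    \<comment> \<open>probability space, data distributions, samples\<close>
    prob: "prob_space M"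
    and D_prob: "\<And>i. prob_space (D i)"
    and \<xi>_meas: "\<And>i s. \<xi> i s \<in> measurable M (D i)"
    and \<xi>_distr: "\<And>i s. distr M (D i) (\<xi> i s) = D i"
    and \<xi>_indep: "prob_space.indep_vars M (\<lambda>(i, s). D i) (\<lambda>(i, s). \<xi> i s) UNIV"
    \<comment> \<open>losses, their x-gradients, and f_i = E F_i\<close>
    and F_int: "\<And>i x. integrable (D i) (F i x)"
    and F_grad: "\<And>i x p. p \<in> space (D i) \<Longrightarrow>
                   ((\<lambda>y. F i y p) has_derivative (\<lambda>h. gF i x p \<bullet> h)) (at x)"
    and gF_meas: "\<And>i. (\<lambda>(x, p). gF i x p) \<in> borel_measurable (borel \<Otimes>\<^sub>M D i)"
    and f_grad: "\<And>i x. (floc F D i has_derivative (\<lambda>h. gf i x \<bullet> h)) (at x)"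
    \<comment> \<open>(A1)\<close>
    and W_sym: "transpose W = W"
    and W_stoch: "\<And>i. (\<Sum>j\<in>UNIV. W $ i $ j) = 1"
    and W_diag: "\<And>i. W $ i $ i > 0"
    and W_nonneg: "\<And>i j. W $ i $ j \<ge> 0"
    and W_eig: "\<And>c v. v \<noteq> 0 \<Longrightarrow> W *v v = c *\<^sub>R v \<Longrightarrow> c > 0"
    and W_gap: "onorm (\<lambda>v. (W - (\<chi> i j. 1 / real CARD('n))) *v v) < 1"
    \<comment> \<open>(A2)\<close>
    and smooth: "\<And>i x y. norm (gf i x - gf i y) \<le> L * norm (x - y)"
    and bdd: "\<And>i. bdd_below (range (floc F D i))"
    \<comment> \<open>(A3)\<close>
    and noise: "\<And>s i (x :: 'w \<Rightarrow> real^'d). x \<in> borel_measurable (filt M D \<xi> s) \<Longrightarrow>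
        integrable M (\<lambda>\<omega>. (norm (gF i (x \<omega>) (\<xi> i s \<omega>) - gf i (x \<omega>)))\<^sup>2)
      \<and> (\<forall>j. AE \<omega> in M. real_cond_exp M (filt M D \<xi> s)
                (\<lambda>\<omega>. (gF i (x \<omega>) (\<xi> i s \<omega>) - gf i (x \<omega>)) $ j) \<omega> = 0)
      \<and> (AE \<omega> in M. real_cond_exp M (filt M D \<xi> s)
                (\<lambda>\<omega>. (norm (gF i (x \<omega>) (\<xi> i s \<omega>) - gf i (x \<omega>)))\<^sup>2) \<omega> \<le> \<sigma>\<^sup>2)"
    \<comment> \<open>(A4) PL, with grad f(x) = (1/n) sum_i grad f_i(x)\<close>
    and \<mu>_pos: "\<mu> > 0"
    and PL: "\<And>x. 2 * \<mu> * (fglob F D x - fstar F D)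
                 \<le> (norm ((1 / real CARD('n)) *\<^sub>R (\<Sum>i\<in>UNIV. gf i x)))\<^sup>2"
    \<comment> \<open>step sizes\<close>
    and \<alpha>_pos: "\<alpha> > 0"
    and \<beta>_range: "0 \<le> \<beta>" "\<beta> < 1"
  shows
    "(\<integral>\<omega>. fglob F D (edmz W \<alpha> \<beta> x0 gF (\<lambda>s i. \<xi> i s \<omega>) (Suc t)) - fstar F D \<partial>M)
     \<le> (1 - \<alpha> * \<mu>) * (\<integral>\<omega>. fglob F D (edmz W \<alpha> \<beta> x0 gF (\<lambda>s i. \<xi> i s \<omega>) t) - fstar F D \<partial>M)
       - \<alpha> * (1 - \<alpha> * L) / 2 *
           (\<integral>\<omega>. (norm ((1 / real CARD('n)) *\<^sub>R
               (\<Sum>i\<in>UNIV. gf i (edmX W \<alpha> \<beta> x0 gF (\<lambda>s i. \<xi> i s \<omega>) t i))))\<^sup>2 \<partial>M)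
       + \<alpha> * L\<^sup>2 / (2 * real CARD('n)) *
           (\<integral>\<omega>. (\<Sum>i\<in>UNIV. (norm (edmX W \<alpha> \<beta> x0 gF (\<lambda>s i. \<xi> i s \<omega>) t i
                    - avg (edmX W \<alpha> \<beta> x0 gF (\<lambda>s i. \<xi> i s \<omega>) t)))\<^sup>2) \<partial>M)
       + \<alpha> ^ 3 * L\<^sup>2 * \<beta>\<^sup>2 / (2 * (1 - \<beta>)\<^sup>2) *
           (\<integral>\<omega>. (norm (avg (edmMprev W \<alpha> \<beta> x0 gF (\<lambda>s i. \<xi> i s \<omega>) t)))\<^sup>2 \<partial>M)
       + \<alpha>\<^sup>2 * L * \<sigma>\<^sup>2 / (2 * real CARD('n))"
  proof -
  interpret edm_ctx M D \<xi> F gF gf W \<alpha> \<beta> L \<mu> \<sigma> x0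
    using assms by (intro edm_ctx.intro edm_ctx_axioms.intro) auto
  show ?thesis by (rule main)
qed

end
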